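(* Let $K\subset L$ be a finite extension of non-archimedean local fields with rings of integers $\mathcal{O}_K$ and $\mathcal{O}_L$, let $\pi$ be a uniformizer of $K$ and $r\in\mathbb{N}$. (i) If $T\colon\mathcal{O}_K^n\to\mathcal{O}_K^n$ is an injective $\mathcal{O}_K$-linear map, then $$|\ker T\otimes(\mathcal{O}_L/\pi^r\mathcal{O}_L)|=|\mathrm{cok}\,T\otimes(\mathcal{O}_L/\pi^r\mathcal{O}_L)|=|\ker T\otimes(\mathcal{O}_K/\pi^r\mathcal{O}_K)|^{[L:K]}=|\mathrm{cok}\,T\otimes(\mathcal{O}_K/\pi^r\mathcal{O}_K)|^{[L:K]}.$$ (ii) If $U\colon\mathcal{O}_L^n\to\mathcal{O}_L^n$ is an injective $\mathcal{O}_L$-linear map and $\Lambda=\{x\in\mathcal{O}_K^n: x\otimes1\in\mathrm{im}\,U\}$, then $$|\ker U\otimes(\mathcal{O}_L/\pi^r\mathcal{O}_L)|=|\mathrm{cok}\,U\otimes(\mathcal{O}_L/\pi^r\mathcal{O}_L)|\le|\ker(\Lambda\otimes(\mathcal{O}_K/\pi^r\mathcal{O}_K)\to(\mathcal{O}_K/\pi^r\mathcal{O}_K)^n)|^{[L:K]}=|\mathrm{cok}(\Lambda\otimes(\mathcal{O}_K/\pi^r\mathcal{O}_K)\to(\mathcal{O}_K/\pi^r\mathcal{O}_K)^n)|^{[L:K]},$$ where the last maps are induced by the inclusion $\Lambda\hookrightarrow\mathcal{O}_K^n$.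
   Context: $\mathrm{cok}$ denotes cokernel; tensor products of a map $T$ with a quotient ring mean the induced map on the corresponding free modules. *)

theory Defs
  imports Complex_Main
begin

definition abs_value :: "('a::field \<Rightarrow> real) \<Rightarrow> bool" where
  "abs_value av \<longleftrightarrow>
     (\<forall>x. av x \<ge> 0) \<and> (\<forall>x. av x = 0 \<longleftrightarrow> x = 0) \<and>
     (\<forall>x y. av (x * y) = av x * av y)"

definition nonarch_abs :: "('a::field \<Rightarrow> real) \<Rightarrow> bool" where
  "nonarch_abs av \<longleftrightarrow> abs_value av \<and> (\<forall>x y. av (x + y) \<le> max (av x) (av y))"

definition discrete_abs :: "('a::field \<Rightarrow> real) \<Rightarrow> bool" where
  "discrete_abs av \<longleftrightarrow> (\<exists>c. 0 < c \<and> c < 1 \<and> av ` (UNIV - {0}) = range (\<lambda>k::int. c powi k))"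

definition complete_abs :: "('a::field \<Rightarrow> real) \<Rightarrow> bool" where
  "complete_abs av \<longleftrightarrow>
     (\<forall>X::nat \<Rightarrow> 'a. (\<forall>e>0. \<exists>N. \<forall>m\<ge>N. \<forall>n\<ge>N. av (X m - X n) < e) \<longrightarrow>
        (\<exists>l. \<forall>e>0. \<exists>N. \<forall>n\<ge>N. av (X n - l) < e))"

definition ints :: "('a::field \<Rightarrow> real) \<Rightarrow> 'a set" where
  "ints av = {x. av x \<le> 1}"

definition max_ideal :: "('a::field \<Rightarrow> real) \<Rightarrow> 'a set" where
  "max_ideal av = {x. av x < 1}"

definition finite_residue_field :: "('a::field \<Rightarrow> real) \<Rightarrow> bool" where
  "finite_residue_field av \<longleftrightarrow>
     finite (ints av // {(x, y). x \<in> ints av \<and> y \<in> ints av \<and> x - y \<in> max_ideal av})"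

definition nonarch_local_field :: "('a::field \<Rightarrow> real) \<Rightarrow> bool" where
  "nonarch_local_field av \<longleftrightarrow>
     nonarch_abs av \<and> discrete_abs av \<and> complete_abs av \<and> finite_residue_field av"

definition uniformizer :: "('a::field \<Rightarrow> real) \<Rightarrow> 'a \<Rightarrow> bool" where
  "uniformizer av p \<longleftrightarrow> p \<in> ints av \<and> max_ideal av = {p * y | y. y \<in> ints av}"

definition field_emb :: "('k::field \<Rightarrow> 'l::field) \<Rightarrow> bool" where
  "field_emb f \<longleftrightarrow> f 1 = 1 \<and> (\<forall>x y. f (x + y) = f x + f y) \<and> (\<forall>x y. f (x * y) = f x * f y)"

definition ext_scale :: "('k::field \<Rightarrow> 'l::field) \<Rightarrow> 'k \<Rightarrow> 'l \<Rightarrow> 'l" where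
  "ext_scale f a x = f a * x"

definition finite_ext :: "('k::field \<Rightarrow> 'l::field) \<Rightarrow> bool" where
  "finite_ext f \<longleftrightarrow> field_emb f \<and> (\<exists>B. finite B \<and> module.span (ext_scale f) B = UNIV)"

definition ext_degree :: "('k::field \<Rightarrow> 'l::field) \<Rightarrow> nat" where
  "ext_degree f = vector_space.dim (ext_scale f) (UNIV :: 'l set)"

text \<open>Finite extension of non-archimedean local fields \<open>K \<subseteq> L\<close> (with absolute values
  \<open>avK\<close>, \<open>avL\<close>): the absolute value of \<open>L\<close> restricts (up to equivalence) to that of \<open>K\<close>.\<close>
definition local_field_ext ::
    "('k::field \<Rightarrow> real) \<Rightarrow> ('l::field \<Rightarrow> real) \<Rightarrow> ('k \<Rightarrow> 'l) \<Rightarrow> bool" where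
  "local_field_ext avK avL f \<longleftrightarrow>
     nonarch_local_field avK \<and> nonarch_local_field avL \<and> finite_ext f \<and>
     (\<exists>s>0. \<forall>a. avL (f a) = avK a powr s)"

definition vecs :: "'a set \<Rightarrow> ('n::finite \<Rightarrow> 'a) set" where
  "vecs R = {x. \<forall>i. x i \<in> R}"

definition mat_vec :: "('n::finite \<Rightarrow> 'n \<Rightarrow> 'a::comm_ring_1) \<Rightarrow> ('n \<Rightarrow> 'a) \<Rightarrow> ('n \<Rightarrow> 'a)" where
  "mat_vec A x = (\<lambda>i. \<Sum>j\<in>UNIV. A i j * x j)"

definition smul_set :: "'a::comm_ring_1 \<Rightarrow> ('n \<Rightarrow> 'a) set \<Rightarrow> ('n \<Rightarrow> 'a) set" where
  "smul_set t M = {(\<lambda>i. t * m i) | m. m \<in> M}"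

definition sum_set :: "('n \<Rightarrow> 'a::comm_ring_1) set \<Rightarrow> ('n \<Rightarrow> 'a) set \<Rightarrow> ('n \<Rightarrow> 'a) set" where
  "sum_set M N = {(\<lambda>i. m i + k i) | m k. m \<in> M \<and> k \<in> N}"

definition quot :: "('n \<Rightarrow> 'a::comm_ring_1) set \<Rightarrow> ('n \<Rightarrow> 'a) set \<Rightarrow> ('n \<Rightarrow> 'a) set set" where
  "quot S N = S // {(x, y). x \<in> S \<and> y \<in> S \<and> (\<lambda>i. x i - y i) \<in> N}"

text \<open>For a matrix \<open>A\<close> over a ring of integers \<open>O\<close> (acting on \<open>O^n\<close>) and \<open>t\<close> in \<open>O\<close>:
  \<open>ker (A \<otimes> O/tO) = {x \<in> O^n. A x \<in> t O^n} / t O^n\<close> and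
  \<open>cok (A \<otimes> O/tO) = O^n / (A O^n + t O^n)\<close>.\<close>
definition ker_mod :: "'a::comm_ring_1 set \<Rightarrow> ('n::finite \<Rightarrow> 'n \<Rightarrow> 'a) \<Rightarrow> 'a \<Rightarrow> ('n \<Rightarrow> 'a) set set" where
  "ker_mod R A t = quot {x \<in> vecs R. mat_vec A x \<in> smul_set t (vecs R)} (smul_set t (vecs R))"

definition cok_mod :: "'a::comm_ring_1 set \<Rightarrow> ('n::finite \<Rightarrow> 'n \<Rightarrow> 'a) \<Rightarrow> 'a \<Rightarrow> ('n \<Rightarrow> 'a) set set" where
  "cok_mod R A t = quot (vecs R) (sum_set (mat_vec A ` vecs R) (smul_set t (vecs R)))"

text \<open>For a submodule \<open>\<Lambda> \<subseteq> O^n\<close>, the map \<open>\<Lambda> \<otimes> O/tO \<rightarrow> (O/tO)^n\<close> induced by inclusion: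
  \<open>\<Lambda> \<otimes> O/tO = \<Lambda>/t\<Lambda>\<close>, so its kernel is \<open>(\<Lambda> \<inter> t O^n) / t\<Lambda>\<close> and its cokernel
  is \<open>O^n / (\<Lambda> + t O^n)\<close>.\<close>
definition ker_incl_mod :: "'a::comm_ring_1 set \<Rightarrow> ('n::finite \<Rightarrow> 'a) set \<Rightarrow> 'a \<Rightarrow> ('n \<Rightarrow> 'a) set set" where
  "ker_incl_mod R Lam t = quot (Lam \<inter> smul_set t (vecs R)) (smul_set t Lam)"

definition cok_incl_mod :: "'a::comm_ring_1 set \<Rightarrow> ('n::finite \<Rightarrow> 'a) set \<Rightarrow> 'a \<Rightarrow> ('n \<Rightarrow> 'a) set set" where
  "cok_incl_mod R Lam t = quot (vecs R) (sum_set Lam (smul_set t (vecs R)))"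

end

theory Submission
  imports Defs "HOL-Library.Function_Algebras" "HOL-Library.FuncSet"
begin

definition sgrp :: "'g::ab_group_add set \<Rightarrow> bool" where
  "sgrp G \<longleftrightarrow> 0 \<in> G \<and> (\<forall>x\<in>G. \<forall>y\<in>G. x - y \<in> G)"

definition gq :: "'g::ab_group_add set \<Rightarrow> 'g set \<Rightarrow> 'g set set" where
  "gq G N = G // {(x, y). x \<in> G \<and> y \<in> G \<and> x - y \<in> N}"

definition cls :: "'g::ab_group_add set \<Rightarrow> 'g set \<Rightarrow> 'g \<Rightarrow> 'g set" where
  "cls G N x = {y\<in>G. x - y \<in> N}"

lemma sgrp_0: "sgrp G \<Longrightarrow> 0 \<in> G" by (simp add: sgrp_def)
lemma sgrp_diff: "sgrp G \<Longrightarrow> x \<in> G \<Longrightarrow> y \<in> G \<Longrightarrow> x - y \<in> G" by (simp add: sgrp_def)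
lemma sgrp_uminus: "sgrp G \<Longrightarrow> x \<in> G \<Longrightarrow> - x \<in> G"
  using sgrp_diff[of G 0 x] sgrp_0[of G] by simp
lemma sgrp_add: "sgrp G \<Longrightarrow> x \<in> G \<Longrightarrow> y \<in> G \<Longrightarrow> x + y \<in> G"
  using sgrp_diff[of G x "- y"] sgrp_uminus[of G y] by simp
lemma sgrp_sum: "sgrp G \<Longrightarrow> (\<And>i. i \<in> I \<Longrightarrow> h i \<in> G) \<Longrightarrow> sum h I \<in> G"
  by (induction I rule: infinite_finite_induct) (auto intro: sgrp_0 sgrp_add)

lemma gq_eq: "gq G N = cls G N ` G"
  unfolding gq_def quotient_def cls_def by auto

lemma cls_self: "sgrp N \<Longrightarrow> x \<in> G \<Longrightarrow> x \<in> cls G N x"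
  by (simp add: cls_def sgrp_0)

lemma cls_eq_iff: "sgrp N \<Longrightarrow> x \<in> G \<Longrightarrow> y \<in> G \<Longrightarrow> cls G N x = cls G N y \<longleftrightarrow> x - y \<in> N"
proof
  assume a: "sgrp N" "x \<in> G" "y \<in> G" "cls G N x = cls G N y"
  have "y \<in> cls G N y" by (rule cls_self[OF a(1) a(3)])
  then have "y \<in> cls G N x" using a(4) by simp
  then show "x - y \<in> N" unfolding cls_def by simp
next
  assume a: "sgrp N" "x \<in> G" "y \<in> G" "x - y \<in> N"
  have "x - z \<in> N \<longleftrightarrow> y - z \<in> N" for z
  proof
    assume "x - z \<in> N" then have "(x - z) - (x - y) \<in> N" using a sgrp_diff by blast
    then show "y - z \<in> N" by (simp add: algebra_simps)
  next
    assume "y - z \<in> N" then have "(y - z) + (x - y) \<in> N" using a sgrp_add by blast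
    then show "x - z \<in> N" by (simp add: algebra_simps)
  qed
  then show "cls G N x = cls G N y" by (auto simp: cls_def)
qed

lemma gq_fun:
  assumes h: "\<And>x y. x \<in> G \<Longrightarrow> y \<in> G \<Longrightarrow> \<psi> x = \<psi> y \<longleftrightarrow> x - y \<in> N"
  shows "card (gq G N) = card (\<psi> ` G) \<and> (finite (gq G N) \<longleftrightarrow> finite (\<psi> ` G))"
proof -
  have c: "x \<in> G \<Longrightarrow> cls G N x = {z\<in>G. \<psi> z = \<psi> x}" for x
  proof -
    assume x: "x \<in> G"
    have "z \<in> G \<Longrightarrow> (x - z \<in> N) = (\<psi> z = \<psi> x)" for z using h[OF x, of z] by auto
    then show ?thesis by (auto simp: cls_def)
  qed
  define F where "F C = \<psi> (SOME x. x \<in> C)" for C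
  have Fc: "x \<in> G \<Longrightarrow> F (cls G N x) = \<psi> x" for x
  proof -
    assume x: "x \<in> G"
    have "x \<in> cls G N x" using c[OF x] x by auto
    then have "(SOME y. y \<in> cls G N x) \<in> cls G N x" by (rule someI)
    then show ?thesis using c[OF x] by (simp add: F_def)
  qed
  have img: "F ` gq G N = \<psi> ` G"
    unfolding gq_eq image_image using Fc by (auto simp: image_iff)
  have inj: "inj_on F (gq G N)"
    unfolding gq_eq
  proof (rule inj_onI, clarify)
    fix x y assume "x \<in> G" "y \<in> G" "F (cls G N x) = F (cls G N y)"
    then show "cls G N x = cls G N y" using Fc c by simp
  qed
  show ?thesis using img inj card_image finite_image_iff by metis
qed

lemma gq_cls_eq:
  assumes "sgrp N" shows "x \<in> G \<Longrightarrow> y \<in> G \<Longrightarrow> cls G N x = cls G N y \<longleftrightarrow> x - y \<in> N"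
  using cls_eq_iff[OF assms] by blast

lemma gq_hom:
  assumes M: "sgrp M"
    and phiH: "\<And>x. x \<in> G \<Longrightarrow> \<phi> x \<in> H"
    and add: "\<And>x y. x \<in> G \<Longrightarrow> y \<in> G \<Longrightarrow> \<phi> (x - y) = \<phi> x - \<phi> y"
    and sur: "\<And>h. h \<in> H \<Longrightarrow> \<exists>g\<in>G. h - \<phi> g \<in> M"
    and ker: "\<And>x. x \<in> G \<Longrightarrow> \<phi> x \<in> M \<longleftrightarrow> x \<in> N"
    and G: "sgrp G"
  shows "card (gq G N) = card (gq H M) \<and> (finite (gq G N) \<longleftrightarrow> finite (gq H M))"
proof -
  define \<psi> where "\<psi> x = cls H M (\<phi> x)" for x
  have "\<psi> x = \<psi> y \<longleftrightarrow> x - y \<in> N" if "x \<in> G" "y \<in> G" for x y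
    using cls_eq_iff[OF M phiH[OF that(1)] phiH[OF that(2)]] add[OF that] ker[of "x - y"]
      sgrp_diff[OF G that] by (simp add: \<psi>_def)
  then have "card (gq G N) = card (\<psi> ` G) \<and> (finite (gq G N) \<longleftrightarrow> finite (\<psi> ` G))"
    by (rule gq_fun)
  moreover have "\<psi> ` G = gq H M"
  proof -
    have "\<psi> ` G \<subseteq> cls H M ` H" using phiH by (auto simp: \<psi>_def)
    moreover have "cls H M ` H \<subseteq> \<psi> ` G"
    proof
      fix C assume "C \<in> cls H M ` H"
      then obtain h where h: "h \<in> H" "C = cls H M h" by auto
      then obtain g where g: "g \<in> G" "h - \<phi> g \<in> M" using sur by blast
      then have "cls H M h = cls H M (\<phi> g)" using cls_eq_iff[OF M h(1) phiH[OF g(1)]] by simp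
      then show "C \<in> \<psi> ` G" using h g by (auto simp: \<psi>_def)
    qed
    ultimately show ?thesis by (simp add: gq_eq)
  qed
  ultimately show ?thesis by simp
qed

lemma cls_translate:
  assumes N: "sgrp N" and NM: "N \<subseteq> M" and M: "sgrp M" and MG: "M \<subseteq> G" and G: "sgrp G"
    and g: "g \<in> G" and m: "m \<in> M"
  shows "(\<lambda>y. y + g) ` cls M N m = cls G N (m + g)"
proof
  show "(\<lambda>y. y + g) ` cls M N m \<subseteq> cls G N (m + g)"
  proof clarify
    fix y assume "y \<in> cls M N m"
    then have y: "y \<in> M" "m - y \<in> N" by (auto simp: cls_def)
    then have "y + g \<in> G" using MG g sgrp_add[OF G] by blast
    then show "y + g \<in> cls G N (m + g)" using y(2) by (simp add: cls_def)
  qed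
  show "cls G N (m + g) \<subseteq> (\<lambda>y. y + g) ` cls M N m"
  proof
    fix z assume z: "z \<in> cls G N (m + g)"
    then have n: "m + g - z \<in> N" by (simp add: cls_def)
    have "z - g = m - (m + g - z)" by (simp add: algebra_simps)
    moreover have "m + g - z \<in> M" using n NM by auto
    then have "m - (m + g - z) \<in> M" using sgrp_diff[OF M m] by blast
    ultimately have "z - g \<in> M" by simp
    moreover have "m - (z - g) \<in> N" using n by (simp add: algebra_simps)
    ultimately show "z \<in> (\<lambda>y. y + g) ` cls M N m"
      by (auto simp: cls_def image_iff intro!: bexI[of _ "z - g"])
  qed
qed

lemma gq_fiber:
  assumes N: "sgrp N" and NM: "N \<subseteq> M" and M: "sgrp M" and MG: "M \<subseteq> G" and G: "sgrp G"
    and g: "g \<in> G"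
  shows "{C \<in> gq G N. C \<subseteq> cls G M g} = (\<lambda>C. (\<lambda>y. y + g) ` C) ` gq M N"
proof
  show "{C \<in> gq G N. C \<subseteq> cls G M g} \<subseteq> (\<lambda>C. (\<lambda>y. y + g) ` C) ` gq M N"
  proof clarify
    fix C assume C: "C \<in> gq G N" "C \<subseteq> cls G M g"
    then obtain x where x: "x \<in> G" "C = cls G N x" by (auto simp: gq_eq)
    then have "x \<in> cls G M g" using C cls_self[OF N x(1)] by auto
    then have gx: "g - x \<in> M" by (simp add: cls_def)
    have xm: "x - g \<in> M" using sgrp_uminus[OF M gx] by simp
    have "C = (\<lambda>y. y + g) ` cls M N (x - g)"
      using cls_translate[OF N NM M MG G g xm] x by simp
    then show "C \<in> (\<lambda>C. (\<lambda>y. y + g) ` C) ` gq M N" using xm by (auto simp: gq_eq)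
  qed
  show "(\<lambda>C. (\<lambda>y. y + g) ` C) ` gq M N \<subseteq> {C \<in> gq G N. C \<subseteq> cls G M g}"
  proof clarify
    fix C assume "C \<in> gq M N"
    then obtain m where m: "m \<in> M" "C = cls M N m" by (auto simp: gq_eq)
    have e: "(\<lambda>y. y + g) ` C = cls G N (m + g)" using cls_translate[OF N NM M MG G g m(1)] m by simp
    have "m + g \<in> G" using m MG g sgrp_add[OF G] by auto
    moreover have "cls G N (m + g) \<subseteq> cls G M g"
    proof
      fix z assume "z \<in> cls G N (m + g)"
      then have "z \<in> G" "m + g - z \<in> N" by (auto simp: cls_def)
      then have "m + g - z \<in> M" using NM by auto
      then have "(m + g - z) - m \<in> M" using sgrp_diff[OF M _ m(1)] by blast
      then show "z \<in> cls G M g" using \<open>z \<in> G\<close> by (simp add: cls_def algebra_simps)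
    qed
    ultimately show "(\<lambda>y. y + g) ` C \<in> gq G N \<and> (\<lambda>y. y + g) ` C \<subseteq> cls G M g"
      using e by (auto simp: gq_eq)
  qed
qed

lemma gq_fiber_card:
  assumes "sgrp N" "N \<subseteq> M" "sgrp M" "M \<subseteq> G" "sgrp G" "g \<in> G"
  shows "card {C \<in> gq G N. C \<subseteq> cls G M g} = card (gq M N)
    \<and> (finite {C \<in> gq G N. C \<subseteq> cls G M g} \<longleftrightarrow> finite (gq M N))"
proof -
  have inj: "inj_on (\<lambda>C. (\<lambda>y. y + g) ` C) (gq M N)"
  proof (rule inj_onI)
    fix A B :: "'a set" assume "(\<lambda>y. y + g) ` A = (\<lambda>y. y + g) ` B"
    moreover have "inj (\<lambda>y::'a. y + g)" by (rule injI) simp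
    ultimately show "A = B" by (simp add: inj_image_eq_iff)
  qed
  show ?thesis unfolding gq_fiber[OF assms] using card_image[OF inj] finite_image_iff[OF inj] by simp
qed

lemma gq_union:
  assumes N: "sgrp N" and NM: "N \<subseteq> M" and M: "sgrp M" and MG: "M \<subseteq> G" and G: "sgrp G"
  shows "gq G N = (\<Union>B\<in>gq G M. {C \<in> gq G N. C \<subseteq> B})"
proof -
  have "C \<in> gq G N \<Longrightarrow> \<exists>B\<in>gq G M. C \<subseteq> B" for C
  proof -
    assume "C \<in> gq G N"
    then obtain x where x: "x \<in> G" "C = cls G N x" by (auto simp: gq_eq)
    then have "C \<subseteq> cls G M x" using NM by (auto simp: cls_def)
    then show ?thesis using x by (auto simp: gq_eq)
  qed
  then show ?thesis by blast
qed

lemma gq_mult: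
  assumes N: "sgrp N" and NM: "N \<subseteq> M" and M: "sgrp M" and MG: "M \<subseteq> G" and G: "sgrp G"
    and fin: "finite (gq G M)" "finite (gq M N)"
  shows "finite (gq G N) \<and> card (gq G N) = card (gq G M) * card (gq M N)"
proof -
  let ?F = "\<lambda>B. {C \<in> gq G N. C \<subseteq> B}"
  have fb: "B \<in> gq G M \<Longrightarrow> finite (?F B) \<and> card (?F B) = card (gq M N)" for B
  proof -
    assume "B \<in> gq G M"
    then obtain g where g: "g \<in> G" "B = cls G M g" unfolding gq_eq by blast
    show ?thesis unfolding g(2) using gq_fiber_card[OF N NM M MG G g(1)] fin(2) by simp
  qed
  have disj: "B1 \<in> gq G M \<Longrightarrow> B2 \<in> gq G M \<Longrightarrow> B1 \<noteq> B2 \<Longrightarrow> ?F B1 \<inter> ?F B2 = {}" for B1 B2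
  proof -
    assume b: "B1 \<in> gq G M" "B2 \<in> gq G M" "B1 \<noteq> B2"
    show ?thesis
    proof (rule ccontr)
      assume "?F B1 \<inter> ?F B2 \<noteq> {}"
      then obtain C where C: "C \<in> gq G N" "C \<subseteq> B1" "C \<subseteq> B2" by auto
      then obtain x where "x \<in> G" "C = cls G N x" by (auto simp: gq_eq)
      then have x: "x \<in> B1" "x \<in> B2" using C cls_self[OF N] by auto
      obtain y1 y2 where y: "y1 \<in> G" "B1 = cls G M y1" "y2 \<in> G" "B2 = cls G M y2"
        using b by (auto simp: gq_eq)
      have "y1 - x \<in> M" "y2 - x \<in> M" using x y by (auto simp: cls_def)
      then have "(y1 - x) - (y2 - x) \<in> M" using sgrp_diff[OF M] by blast
      then have "B1 = B2" using y cls_eq_iff[OF M y(1) y(3)] by simp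
      then show False using b by simp
    qed
  qed
  have U: "gq G N = (\<Union>B\<in>gq G M. ?F B)" by (rule gq_union[OF assms(1-5)])
  have "finite (\<Union>B\<in>gq G M. ?F B)" using fin fb by (intro finite_UN_I) auto
  then have "finite (gq G N)" by (simp only: U[symmetric])
  moreover have "card (\<Union>B\<in>gq G M. ?F B) = (\<Sum>B\<in>gq G M. card (?F B))"
    by (rule card_UN_disjoint[OF fin(1)]) (use fb disj in blast)+
  then have "card (gq G N) = (\<Sum>B\<in>gq G M. card (?F B))" by (simp only: U[symmetric])
  moreover have "\<dots> = (\<Sum>B\<in>gq G M. card (gq M N))" using fb by (intro sum.cong) auto
  moreover have "\<dots> = card (gq G M) * card (gq M N)" by simp
  ultimately show ?thesis by simp
qed

lemma gq_mult':
  assumes N: "sgrp N" and NM: "N \<subseteq> M" and M: "sgrp M" and MG: "M \<subseteq> G" and G: "sgrp G"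
    and fin: "finite (gq G N)"
  shows "finite (gq G M) \<and> finite (gq M N) \<and> card (gq G N) = card (gq G M) * card (gq M N)"
proof -
  have "gq G M = (\<lambda>C. \<Union> (cls G M ` C)) ` gq G N"
  proof -
    have "\<Union> (cls G M ` cls G N x) = cls G M x" if x: "x \<in> G" for x
    proof
      show "\<Union> (cls G M ` cls G N x) \<subseteq> cls G M x"
      proof clarify
        fix y z assume "y \<in> cls G N x" "z \<in> cls G M y"
        then have "x - y \<in> M" "y - z \<in> M" "z \<in> G" using NM by (auto simp: cls_def)
        then have "(x - y) + (y - z) \<in> M" using sgrp_add[OF M] by blast
        then show "z \<in> cls G M x" using \<open>z \<in> G\<close> by (simp add: cls_def)
      qed
      show "cls G M x \<subseteq> \<Union> (cls G M ` cls G N x)" using cls_self[OF N x] by auto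
    qed
    then show ?thesis unfolding gq_eq image_image by (auto simp: image_iff)
  qed
  then have f1: "finite (gq G M)" using fin by simp
  obtain x where "x \<in> G" using G sgrp_0 by blast
  then have "finite {C \<in> gq G N. C \<subseteq> cls G M x}" using fin by simp
  then have f2: "finite (gq M N)" using gq_fiber_card[OF assms(1-5) \<open>x \<in> G\<close>] by simp
  show ?thesis using gq_mult[OF assms(1-5) f1 f2] f1 f2 by simp
qed

definition prodset :: "'i set \<Rightarrow> 'g::ab_group_add set \<Rightarrow> ('i \<Rightarrow> 'g) set" where
  "prodset I G = {x. \<forall>i. (i \<in> I \<longrightarrow> x i \<in> G) \<and> (i \<notin> I \<longrightarrow> x i = 0)}"

lemma sgrp_prodset: "sgrp G \<Longrightarrow> sgrp (prodset I G)"
  by (auto simp: sgrp_def prodset_def)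

lemma gq_prod:
  fixes I :: "'i set" and G N :: "'g::ab_group_add set"
  assumes N: "sgrp N" and NG: "N \<subseteq> G" and I: "finite I" and G: "sgrp G"
  shows "card (gq (prodset I G) (prodset I N)) = card (gq G N) ^ card I
    \<and> (finite (gq G N) \<longrightarrow> finite (gq (prodset I G) (prodset I N)))"
proof -
  define \<psi> where "\<psi> x = restrict (\<lambda>i. cls G N (x i)) I" for x :: "'i \<Rightarrow> 'g"
  have "\<psi> x = \<psi> y \<longleftrightarrow> x - y \<in> prodset I N" if "x \<in> prodset I G" "y \<in> prodset I G" for x y
  proof -
    have "\<psi> x = \<psi> y \<longleftrightarrow> (\<forall>i\<in>I. cls G N (x i) = cls G N (y i))"
      by (simp add: \<psi>_def restrict_def fun_eq_iff) metis
    also have "\<dots> \<longleftrightarrow> (\<forall>i\<in>I. x i - y i \<in> N)" using that cls_eq_iff[OF N] by (auto simp: prodset_def)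
    also have "\<dots> \<longleftrightarrow> x - y \<in> prodset I N" using that by (auto simp: prodset_def)
    finally show ?thesis .
  qed
  then have 1: "card (gq (prodset I G) (prodset I N)) = card (\<psi> ` prodset I G)
      \<and> (finite (gq (prodset I G) (prodset I N)) \<longleftrightarrow> finite (\<psi> ` prodset I G))"
    by (rule gq_fun)
  have 2: "\<psi> ` prodset I G = PiE I (\<lambda>_. gq G N)"
  proof
    show "\<psi> ` prodset I G \<subseteq> PiE I (\<lambda>_. gq G N)"
      by (auto simp: \<psi>_def prodset_def gq_eq)
    show "PiE I (\<lambda>_. gq G N) \<subseteq> \<psi> ` prodset I G"
    proof
      fix F assume F: "F \<in> PiE I (\<lambda>_. gq G N)"
      then have "\<forall>i\<in>I. \<exists>x\<in>G. F i = cls G N x" by (auto simp: gq_eq)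
      then obtain r where r: "\<forall>i\<in>I. r i \<in> G \<and> F i = cls G N (r i)" by metis
      define x where "x i = (if i \<in> I then r i else 0)" for i
      have "x \<in> prodset I G" using r by (auto simp: x_def prodset_def)
      moreover have "\<psi> x = F" using F r by (auto simp: \<psi>_def x_def restrict_def PiE_def extensional_def fun_eq_iff)
      ultimately show "F \<in> \<psi> ` prodset I G" by blast
    qed
  qed
  show ?thesis using 1 2 card_PiE[OF I, of "\<lambda>_. gq G N"] finite_PiE[OF I, of "\<lambda>_. gq G N"]
    by (simp add: prod_constant)
qed


section \<open>Generic facts on ker / cok\<close>

definition subring :: "'a::comm_ring_1 set \<Rightarrow> bool" where
  "subring R \<longleftrightarrow> sgrp R \<and> 1 \<in> R \<and> (\<forall>x\<in>R. \<forall>y\<in>R. x * y \<in> R)"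

lemma subring_mult: "subring R \<Longrightarrow> x \<in> R \<Longrightarrow> y \<in> R \<Longrightarrow> x * y \<in> R"
  by (simp add: subring_def)
lemma subring_sgrp: "subring R \<Longrightarrow> sgrp R" by (simp add: subring_def)
lemma subring_1: "subring R \<Longrightarrow> 1 \<in> R" by (simp add: subring_def)
lemma subring_power: "subring R \<Longrightarrow> x \<in> R \<Longrightarrow> x ^ k \<in> R"
  by (induction k) (auto simp: subring_1 subring_mult)

lemma quot_gq: "quot S N = gq S N"
  unfolding quot_def gq_def by (simp add: fun_diff_def)

lemma vecs_prodset: "vecs R = prodset (UNIV :: 'n::finite set) R"
  by (auto simp: vecs_def prodset_def)

lemma sgrp_vecs: "sgrp R \<Longrightarrow> sgrp (vecs R)"
  unfolding vecs_prodset by (rule sgrp_prodset)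

definition ideal_of :: "'a::comm_ring_1 set \<Rightarrow> 'a \<Rightarrow> 'a set" where
  "ideal_of R t = (\<lambda>x. t * x) ` R"

lemma sgrp_ideal: "sgrp R \<Longrightarrow> sgrp (ideal_of R t)"
  unfolding sgrp_def ideal_of_def
  by (auto simp: image_iff right_diff_distrib[symmetric]) (metis mult_zero_right)

lemma ideal_sub: "subring R \<Longrightarrow> t \<in> R \<Longrightarrow> ideal_of R t \<subseteq> R"
  by (auto simp: ideal_of_def subring_mult)

lemma smul_vecs: "smul_set t (vecs R) = vecs (ideal_of R t)"
proof
  show "smul_set t (vecs R) \<subseteq> vecs (ideal_of R t)"
    by (auto simp: smul_set_def vecs_def ideal_of_def)
  show "vecs (ideal_of R t) \<subseteq> smul_set t (vecs R)"
  proof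
    fix x assume "x \<in> vecs (ideal_of R t)"
    then have "\<forall>i. \<exists>m\<in>R. x i = t * m" by (auto simp: vecs_def ideal_of_def)
    then obtain m where m: "\<forall>i. m i \<in> R \<and> x i = t * m i" by metis
    then show "x \<in> smul_set t (vecs R)" unfolding smul_set_def vecs_def
      by (auto intro!: exI[of _ m])
  qed
qed

lemma smul_set_eq: "smul_set t M = (\<lambda>m. (\<lambda>i. t * m i)) ` M"
  by (auto simp: smul_set_def)

lemma sum_set_eq: "sum_set M N = {m + k | m k. m \<in> M \<and> k \<in> N}"
  by (auto simp: sum_set_def plus_fun_def)

lemma sgrp_sum_set: "sgrp M \<Longrightarrow> sgrp N \<Longrightarrow> sgrp (sum_set M N)"
  unfolding sum_set_eq sgrp_def
proof (intro conjI ballI)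
  assume a: "0 \<in> M \<and> (\<forall>x\<in>M. \<forall>y\<in>M. x - y \<in> M)" "0 \<in> N \<and> (\<forall>x\<in>N. \<forall>y\<in>N. x - y \<in> N)"
  show "0 \<in> {m + k |m k. m \<in> M \<and> k \<in> N}"
    by (intro CollectI exI[of _ 0] exI[of _ 0]) (simp add: a)
  fix x y assume "x \<in> {m + k |m k. m \<in> M \<and> k \<in> N}" "y \<in> {m + k |m k. m \<in> M \<and> k \<in> N}"
  then obtain m1 k1 m2 k2 where "x = m1 + k1" "y = m2 + k2" "m1 \<in> M" "m2 \<in> M" "k1 \<in> N" "k2 \<in> N"
    by blast
  moreover have "x - y = (m1 - m2) + (k1 - k2)" using calculation by (simp add: algebra_simps)
  moreover have "m1 - m2 \<in> M" "k1 - k2 \<in> N" using a calculation by blast+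
  ultimately show "x - y \<in> {m + k |m k. m \<in> M \<and> k \<in> N}"
    by (intro CollectI exI[of _ "m1 - m2"] exI[of _ "k1 - k2"]) simp
qed

lemma mat_vec_diff: "mat_vec A (x - y) = mat_vec A x - mat_vec A y"
  by (simp add: mat_vec_def fun_eq_iff right_diff_distrib sum_subtractf)

lemma mat_vec_add: "mat_vec A (x + y) = mat_vec A x + mat_vec A y"
  by (simp add: mat_vec_def fun_eq_iff distrib_left sum.distrib)

lemma mat_vec_scale: "mat_vec A (\<lambda>i. t * x i) = (\<lambda>i. t * mat_vec A x i)"
  by (simp add: mat_vec_def fun_eq_iff sum_distrib_left algebra_simps)

lemma mat_vec_vecs: "subring R \<Longrightarrow> (\<forall>i j. A i j \<in> R) \<Longrightarrow> x \<in> vecs R \<Longrightarrow> mat_vec A x \<in> vecs R"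
  unfolding mat_vec_def vecs_def
  by (auto intro!: sgrp_sum subring_sgrp subring_mult)

lemma gq_card_pos: "sgrp N \<Longrightarrow> sgrp G \<Longrightarrow> finite (gq G N) \<Longrightarrow> card (gq G N) > 0"
  using sgrp_0[of G] by (auto simp: gq_eq card_gt_0_iff)

lemma gq_sub:
  assumes "sgrp N" "N \<subseteq> M" "sgrp M" "M \<subseteq> G" "sgrp G" "finite (gq G N)"
  shows "finite (gq G M) \<and> card (gq G M) \<le> card (gq G N)"
proof -
  have a: "finite (gq G M) \<and> finite (gq M N) \<and> card (gq G N) = card (gq G M) * card (gq M N)"
    by (rule gq_mult'[OF assms])
  then have "card (gq M N) > 0" using gq_card_pos assms by blast
  then show ?thesis using a by simp
qed

lemma ker_cok_eq:
  fixes R :: "'a::comm_ring_1 set" and A :: "'n::finite \<Rightarrow> 'n \<Rightarrow> 'a"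
  assumes R: "subring R" and A: "\<forall>i j. A i j \<in> R" and t: "t \<in> R"
    and fin: "finite (gq (vecs R :: ('n \<Rightarrow> 'a) set) (smul_set t (vecs R)))"
  shows "finite (ker_mod R A t) \<and> finite (cok_mod R A t) \<and> card (ker_mod R A t) = card (cok_mod R A t)"
proof -
  let ?V = "vecs R :: ('n \<Rightarrow> 'a) set"
  let ?T = "smul_set t ?V"
  let ?S = "{x \<in> ?V. mat_vec A x \<in> ?T}"
  let ?W = "sum_set (mat_vec A ` ?V) ?T"
  have sR: "sgrp R" using R by (rule subring_sgrp)
  have V: "sgrp ?V" by (rule sgrp_vecs[OF sR])
  have T: "sgrp ?T" unfolding smul_vecs by (rule sgrp_vecs[OF sgrp_ideal[OF sR]])
  have TV: "?T \<subseteq> ?V" unfolding smul_vecs using ideal_sub[OF R t] by (auto simp: vecs_def)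
  have AV: "mat_vec A ` ?V \<subseteq> ?V" using mat_vec_vecs[OF R A] by auto
  have sAV: "sgrp (mat_vec A ` ?V)"
    unfolding sgrp_def
  proof (intro conjI ballI)
    have "mat_vec A 0 = 0" using mat_vec_diff[of A 0 0] by simp
    then show "0 \<in> mat_vec A ` ?V" using sgrp_0[OF V] by (metis image_eqI)
    fix x y assume "x \<in> mat_vec A ` ?V" "y \<in> mat_vec A ` ?V"
    then obtain a b where "a \<in> ?V" "b \<in> ?V" "x = mat_vec A a" "y = mat_vec A b" by auto
    moreover have "a - b \<in> ?V" using sgrp_diff[OF V] calculation by blast
    ultimately show "x - y \<in> mat_vec A ` ?V" using mat_vec_diff[of A a b] by (metis image_eqI)
  qed
  have W: "sgrp ?W" by (rule sgrp_sum_set[OF sAV T])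
  have TW: "?T \<subseteq> ?W" unfolding sum_set_eq
  proof
    fix k assume "k \<in> ?T"
    then show "k \<in> {m + k |m k. m \<in> mat_vec A ` ?V \<and> k \<in> ?T}"
      using sgrp_0[OF sAV] by (intro CollectI exI[of _ 0] exI[of _ k]) simp
  qed
  have WV: "?W \<subseteq> ?V" unfolding sum_set_eq
  proof
    fix z assume "z \<in> {m + k |m k. m \<in> mat_vec A ` ?V \<and> k \<in> ?T}"
    then obtain m k where "z = m + k" "m \<in> mat_vec A ` ?V" "k \<in> ?T" by blast
    moreover then have "m \<in> ?V" "k \<in> ?V" using AV TV by auto
    ultimately show "z \<in> ?V" using sgrp_add[OF V] by blast
  qed
  have S: "sgrp ?S" unfolding sgrp_def
  proof (intro conjI ballI)
    have "mat_vec A 0 = 0" using mat_vec_diff[of A 0 0] by simp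
    then show "0 \<in> ?S" using sgrp_0[OF V] sgrp_0[OF T] by simp
    fix x y assume "x \<in> ?S" "y \<in> ?S"
    then have "x \<in> ?V" "y \<in> ?V" "mat_vec A x \<in> ?T" "mat_vec A y \<in> ?T" by auto
    then show "x - y \<in> ?S" using sgrp_diff[OF V] sgrp_diff[OF T] mat_vec_diff[of A x y] by simp
  qed
  have TS: "?T \<subseteq> ?S"
  proof
    fix x assume x: "x \<in> ?T"
    then obtain m where m: "m \<in> ?V" "x = (\<lambda>i. t * m i)" by (auto simp: smul_set_def)
    have "mat_vec A x = (\<lambda>i. t * mat_vec A m i)" using m mat_vec_scale by simp
    moreover have "mat_vec A m \<in> ?V" using AV m by auto
    ultimately show "x \<in> ?S" using x TV by (auto simp: smul_set_def)
  qed
  have SV: "?S \<subseteq> ?V" by auto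
  have m1: "finite (gq ?V ?S) \<and> finite (gq ?S ?T) \<and> card (gq ?V ?T) = card (gq ?V ?S) * card (gq ?S ?T)"
    by (rule gq_mult'[OF T TS S SV V fin])
  have m2: "finite (gq ?V ?W) \<and> finite (gq ?W ?T) \<and> card (gq ?V ?T) = card (gq ?V ?W) * card (gq ?W ?T)"
    by (rule gq_mult'[OF T TW W WV V fin])
  have iso: "card (gq ?V ?S) = card (gq ?W ?T) \<and> (finite (gq ?V ?S) \<longleftrightarrow> finite (gq ?W ?T))"
  proof (rule gq_hom[OF T _ _ _ _ V])
    show "x \<in> ?V \<Longrightarrow> mat_vec A x \<in> ?W" for x
      unfolding sum_set_eq
      by (rule CollectI, rule exI[of _ "mat_vec A x"], rule exI[of _ 0]) (simp add: sgrp_0[OF T])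
    show "x \<in> ?V \<Longrightarrow> y \<in> ?V \<Longrightarrow> mat_vec A (x - y) = mat_vec A x - mat_vec A y" for x y
      by (rule mat_vec_diff)
    show "\<exists>g\<in>?V. h - mat_vec A g \<in> ?T" if hW: "h \<in> ?W" for h
    proof -
      obtain m k where "h = m + k" "m \<in> mat_vec A ` ?V" "k \<in> ?T" using hW unfolding sum_set_eq by blast
      then obtain v where "v \<in> ?V" "m = mat_vec A v" by blast
      then show ?thesis using \<open>h = m + k\<close> \<open>k \<in> ?T\<close> by (intro bexI[of _ v]) simp_all
    qed
    show "x \<in> ?V \<Longrightarrow> mat_vec A x \<in> ?T \<longleftrightarrow> x \<in> ?S" for x by simp
  qed
  have pos: "card (gq ?W ?T) > 0" using gq_card_pos[OF T W] m2 by blast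
  have "card (gq ?W ?T) * card (gq ?S ?T) = card (gq ?V ?T)"
    using conjunct2[OF conjunct2[OF m1]] conjunct1[OF iso] by simp
  also have "\<dots> = card (gq ?W ?T) * card (gq ?V ?W)"
    using conjunct2[OF conjunct2[OF m2]] by (simp add: mult.commute)
  finally have "card (gq ?W ?T) * card (gq ?S ?T) = card (gq ?W ?T) * card (gq ?V ?W)" .
  then have "card (gq ?S ?T) = card (gq ?V ?W)" using pos by simp
  then show ?thesis using m1 m2 unfolding ker_mod_def cok_mod_def quot_gq by simp
qed

lemma sgrp_smul: "sgrp M \<Longrightarrow> sgrp (smul_set t M)"
  unfolding sgrp_def smul_set_eq
proof (intro conjI ballI)
  assume a: "0 \<in> M \<and> (\<forall>x\<in>M. \<forall>y\<in>M. x - y \<in> M)"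
  have "(\<lambda>i. t * (0::'a \<Rightarrow> 'b) i) = 0" by (simp add: fun_eq_iff)
  then show "0 \<in> (\<lambda>m i. t * m i) ` M" using a by (metis image_eqI)
  fix x y assume "x \<in> (\<lambda>m i. t * m i) ` M" "y \<in> (\<lambda>m i. t * m i) ` M"
  then obtain a1 b1 where "a1 \<in> M" "b1 \<in> M" "x = (\<lambda>i. t * a1 i)" "y = (\<lambda>i. t * b1 i)" by blast
  moreover then have "x - y = (\<lambda>i. t * (a1 - b1) i)" by (simp add: fun_eq_iff right_diff_distrib)
  moreover have "a1 - b1 \<in> M" using a calculation by blast
  ultimately show "x - y \<in> (\<lambda>m i. t * m i) ` M" by (metis image_eqI)
qed

lemma sgrp_Int: "sgrp M \<Longrightarrow> sgrp N \<Longrightarrow> sgrp (M \<inter> N)"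
  unfolding sgrp_def by blast

lemma ker_cok_incl_eq:
  fixes R :: "'a::idom set" and Lam :: "('n::finite \<Rightarrow> 'a) set"
  assumes R: "subring R" and t: "t \<in> R" "t \<noteq> 0" and L: "sgrp Lam" and LV: "Lam \<subseteq> vecs R"
    and cl: "\<And>a x. a \<in> R \<Longrightarrow> x \<in> Lam \<Longrightarrow> (\<lambda>i. a * x i) \<in> Lam"
    and sL: "smul_set s (vecs R) \<subseteq> Lam" and s: "s \<in> R"
    and fins: "finite (gq (vecs R :: ('n \<Rightarrow> 'a) set) (smul_set s (vecs R)))"
    and fint: "finite (gq (vecs R :: ('n \<Rightarrow> 'a) set) (smul_set t (vecs R)))"
  shows "finite (ker_incl_mod R Lam t) \<and> finite (cok_incl_mod R Lam t)
     \<and> card (ker_incl_mod R Lam t) = card (cok_incl_mod R Lam t)"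
proof -
  let ?V = "vecs R :: ('n \<Rightarrow> 'a) set"
  let ?T = "smul_set t ?V"
  let ?S = "smul_set s ?V"
  let ?tL = "smul_set t Lam"
  let ?X = "Lam \<inter> ?T"
  let ?Y = "sum_set Lam ?T"
  have sR: "sgrp R" using R by (rule subring_sgrp)
  have V: "sgrp ?V" by (rule sgrp_vecs[OF sR])
  have T: "sgrp ?T" by (rule sgrp_smul[OF V])
  have S: "sgrp ?S" by (rule sgrp_smul[OF V])
  have tL: "sgrp ?tL" by (rule sgrp_smul[OF L])
  have X: "sgrp ?X" by (rule sgrp_Int[OF L T])
  have Y: "sgrp ?Y" by (rule sgrp_sum_set[OF L T])
  have TV: "?T \<subseteq> ?V" unfolding smul_vecs using ideal_sub[OF R t(1)] by (auto simp: vecs_def)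
  have tLX: "?tL \<subseteq> ?X"
  proof
    fix x assume "x \<in> ?tL"
    then obtain l where l: "l \<in> Lam" "x = (\<lambda>i. t * l i)" by (auto simp: smul_set_def)
    then have "x \<in> Lam" using cl t by simp
    moreover have "x \<in> ?T" using l LV by (auto simp: smul_set_def)
    ultimately show "x \<in> ?X" by simp
  qed
  have tLT: "?tL \<subseteq> ?T" using tLX by auto
  have XL: "?X \<subseteq> Lam" by auto
  have TY: "?T \<subseteq> ?Y" unfolding sum_set_eq
  proof
    fix k assume "k \<in> ?T"
    then show "k \<in> {m + k |m k. m \<in> Lam \<and> k \<in> ?T}"
      using sgrp_0[OF L] by (intro CollectI exI[of _ 0] exI[of _ k]) simp
  qed
  have YV: "?Y \<subseteq> ?V" unfolding sum_set_eq
  proof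
    fix z assume "z \<in> {m + k |m k. m \<in> Lam \<and> k \<in> ?T}"
    then obtain m k where "z = m + k" "m \<in> Lam" "k \<in> ?T" by blast
    moreover then have "m \<in> ?V" "k \<in> ?V" using LV TV by auto
    ultimately show "z \<in> ?V" using sgrp_add[OF V] by blast
  qed
  have finVL: "finite (gq ?V Lam)" using gq_sub[OF S sL L LV V fins] by blast
  have posVL: "card (gq ?V Lam) > 0" by (rule gq_card_pos[OF L V finVL])
  have isoTL: "card (gq ?V Lam) = card (gq ?T ?tL) \<and> (finite (gq ?V Lam) \<longleftrightarrow> finite (gq ?T ?tL))"
  proof (rule gq_hom[OF tL _ _ _ _ V])
    show "x \<in> ?V \<Longrightarrow> (\<lambda>i. t * x i) \<in> ?T" for x by (auto simp: smul_set_def)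
    show "(\<lambda>i. t * (x - y) i) = (\<lambda>i. t * x i) - (\<lambda>i. t * y i)" for x y
      by (simp add: fun_eq_iff right_diff_distrib)
    show "\<exists>g\<in>?V. h - (\<lambda>i. t * g i) \<in> ?tL" if hT: "h \<in> ?T" for h
    proof -
      obtain g where "g \<in> ?V" "h = (\<lambda>i. t * g i)" using hT by (auto simp: smul_set_def)
      then show ?thesis using sgrp_0[OF tL] by (intro bexI[of _ g]) simp_all
    qed
    show "(\<lambda>i. t * x i) \<in> ?tL \<longleftrightarrow> x \<in> Lam" if "x \<in> ?V" for x
    proof
      assume "(\<lambda>i. t * x i) \<in> ?tL"
      then obtain l where "l \<in> Lam" "(\<lambda>i. t * x i) = (\<lambda>i. t * l i)" by (auto simp: smul_set_def)
      moreover then have "x = l" using t(2) by (simp add: fun_eq_iff)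
      ultimately show "x \<in> Lam" by simp
    qed (auto simp: smul_set_def)
  qed
  have m2: "finite (gq ?V ?tL) \<and> card (gq ?V ?tL) = card (gq ?V ?T) * card (gq ?T ?tL)"
    by (rule gq_mult[OF tL tLT T TV V fint]) (use isoTL finVL in blast)
  have m1: "finite (gq ?V Lam) \<and> finite (gq Lam ?tL) \<and> card (gq ?V ?tL) = card (gq ?V Lam) * card (gq Lam ?tL)"
    by (rule gq_mult'[OF tL _ L LV V]) (use tLX m2 in auto)
  have e1: "card (gq Lam ?tL) = card (gq ?V ?T)"
  proof -
    have "card (gq ?V Lam) * card (gq Lam ?tL) = card (gq ?V ?tL)"
      using conjunct2[OF conjunct2[OF m1]] by simp
    also have "\<dots> = card (gq ?V ?T) * card (gq ?T ?tL)" using conjunct2[OF m2] by simp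
    also have "\<dots> = card (gq ?V Lam) * card (gq ?V ?T)" using conjunct1[OF isoTL] by (simp add: mult.commute)
    finally have "card (gq ?V Lam) * card (gq Lam ?tL) = card (gq ?V Lam) * card (gq ?V ?T)" .
    then show ?thesis using posVL by simp
  qed
  have m3: "finite (gq Lam ?X) \<and> finite (gq ?X ?tL) \<and> card (gq Lam ?tL) = card (gq Lam ?X) * card (gq ?X ?tL)"
    by (rule gq_mult'[OF tL tLX X XL L]) (use m1 in blast)
  have iso2: "card (gq Lam ?X) = card (gq ?Y ?T) \<and> (finite (gq Lam ?X) \<longleftrightarrow> finite (gq ?Y ?T))"
  proof (rule gq_hom[OF T _ _ _ _ L, where \<phi> = "\<lambda>x. x"])
    show "x \<in> Lam \<Longrightarrow> x \<in> ?Y" for x unfolding sum_set_eq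
      using sgrp_0[OF T] by (intro CollectI exI[of _ x] exI[of _ 0]) simp
    show "x - y = x - y" for x y :: "'n \<Rightarrow> 'a" by simp
    show "\<exists>g\<in>Lam. h - g \<in> ?T" if hY: "h \<in> ?Y" for h
    proof -
      obtain m k where "h = m + k" "m \<in> Lam" "k \<in> ?T" using hY unfolding sum_set_eq by blast
      then show ?thesis by (intro bexI[of _ m]) simp_all
    qed
    show "x \<in> Lam \<Longrightarrow> x \<in> ?T \<longleftrightarrow> x \<in> ?X" for x by simp
  qed
  have m4: "finite (gq ?V ?Y) \<and> finite (gq ?Y ?T) \<and> card (gq ?V ?T) = card (gq ?V ?Y) * card (gq ?Y ?T)"
    by (rule gq_mult'[OF T TY Y YV V fint])
  have posYT: "card (gq ?Y ?T) > 0" using gq_card_pos[OF T Y] m4 by blast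
  have "card (gq ?Y ?T) * card (gq ?X ?tL) = card (gq ?V ?T)"
    using m3 iso2 e1 by simp
  also have "\<dots> = card (gq ?Y ?T) * card (gq ?V ?Y)" using m4 by (simp add: mult.commute)
  finally have "card (gq ?X ?tL) = card (gq ?V ?Y)" using posYT by simp
  then show ?thesis using m3 m4 unfolding ker_incl_mod_def cok_incl_mod_def quot_gq by simp
qed


locale dval =
  fixes av :: "'a::field \<Rightarrow> real" and c :: real
  assumes na: "nonarch_abs av" and c0: "0 < c" and c1: "c < 1"
    and vg: "av ` (UNIV - {0}) = range (\<lambda>k::int. c powi k)"
begin

lemma av_nonneg: "0 \<le> av x" using na by (simp add: nonarch_abs_def abs_value_def)
lemma av_eq0: "av x = 0 \<longleftrightarrow> x = 0" using na by (simp add: nonarch_abs_def abs_value_def)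
lemma av_mult: "av (x * y) = av x * av y" using na by (simp add: nonarch_abs_def abs_value_def)
lemma av_ultra: "av (x + y) \<le> max (av x) (av y)" using na by (simp add: nonarch_abs_def)
lemma av_0[simp]: "av 0 = 0" using av_eq0 by simp
lemma av_pos: "x \<noteq> 0 \<Longrightarrow> 0 < av x" using av_nonneg[of x] av_eq0[of x] by linarith
lemma av_1[simp]: "av 1 = 1"
proof -
  have "av 1 = av 1 * av 1" using av_mult[of 1 1] by simp
  moreover have "av 1 \<noteq> 0" using av_eq0 by simp
  ultimately show ?thesis by simp
qed
lemma av_m1: "av (- 1) = 1"
proof -
  have "av (-1) * av (-1) = 1" using av_mult[of "-1" "-1"] by simp
  then have "(av (-1))^2 = 1" by (simp add: power2_eq_square)
  then show ?thesis using av_nonneg[of "-1"] power2_eq_1_iff[of "av (-1)"] by auto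
qed
lemma av_minus[simp]: "av (- x) = av x"
  using av_mult[of "-1" x] av_m1 by simp
lemma av_diff: "av (x - y) \<le> max (av x) (av y)"
  using av_ultra[of x "- y"] by simp
lemma av_diff_comm: "av (x - y) = av (y - x)"
  using av_minus[of "y - x"] by simp
lemma av_inverse: "av (inverse x) = inverse (av x)"
proof (cases "x = 0")
  case False
  then have h: "av x * av (inverse x) = 1" using av_mult[of x "inverse x"] by simp
  have "av x \<noteq> 0" using av_pos[OF False] by simp
  then show ?thesis using h by (metis inverse_unique)
qed simp
lemma av_divide: "av (x / y) = av x / av y"
  by (simp add: divide_inverse av_mult av_inverse)
lemma av_power: "av (x ^ n) = av x ^ n"
  by (induction n) (simp_all add: av_mult)

lemma av_add_strict: "av x < av y \<Longrightarrow> av (x + y) = av y"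
proof -
  assume a: "av x < av y"
  have "av (x + y) \<le> av y" using av_ultra[of x y] a by simp
  moreover have "av y \<le> max (av (x + y)) (av x)" using av_diff[of "x + y" x] by simp
  ultimately show ?thesis using a by linarith
qed

lemma av_sum_le: "0 \<le> B \<Longrightarrow> (\<And>i. i \<in> I \<Longrightarrow> av (h i) \<le> B) \<Longrightarrow> av (sum h I) \<le> B"
proof (induction I rule: infinite_finite_induct)
  case (insert x F)
  then have "av (h x) \<le> B" "av (sum h F) \<le> B" by simp_all
  then show ?case using av_ultra[of "h x" "sum h F"] insert(1,2) by simp
qed simp_all

lemma av_sum_less: "0 < B \<Longrightarrow> (\<And>i. i \<in> I \<Longrightarrow> av (h i) < B) \<Longrightarrow> av (sum h I) < B"
proof (induction I rule: infinite_finite_induct)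
  case (insert x F)
  then have "av (h x) < B" "av (sum h F) < B" by simp_all
  then show ?case using av_ultra[of "h x" "sum h F"] insert(1,2) by simp
qed simp_all

lemma val_exists: "x \<noteq> 0 \<Longrightarrow> \<exists>k. av x = c powi k"
  using vg by blast

lemma c_powi_pos: "0 < c powi k" using c0 by simp

lemma c_powi_less1: "c powi k < 1 \<longleftrightarrow> 0 < k"
proof
  assume "c powi k < 1"
  show "0 < k"
  proof (rule ccontr)
    assume "\<not> 0 < k"
    then have "c powi 0 \<le> c powi k" using power_int_decreasing[of k 0 c] c0 c1 by simp
    then show False using \<open>c powi k < 1\<close> by simp
  qed
next
  assume "0 < k"
  then show "c powi k < 1" using power_int_strict_decreasing[of 0 k c] c0 c1 by simp
qed

lemma c_powi_le1: "c powi k \<le> 1 \<longleftrightarrow> 0 \<le> k"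
proof
  assume "c powi k \<le> 1"
  show "0 \<le> k"
  proof (rule ccontr)
    assume "\<not> 0 \<le> k"
    then have "c powi 0 < c powi k" using power_int_strict_decreasing[of k 0 c] c0 c1 by simp
    then show False using \<open>c powi k \<le> 1\<close> by simp
  qed
next
  assume "0 \<le> k"
  then show "c powi k \<le> 1" using power_int_decreasing[of 0 k c] c0 c1 by simp
qed

lemma c_powi_inj: "c powi k = c powi l \<Longrightarrow> k = l"
proof (rule ccontr)
  assume a: "c powi k = c powi l" "k \<noteq> l"
  then consider "k < l" | "l < k" by linarith
  then show False
    using power_int_strict_decreasing[of k l c] power_int_strict_decreasing[of l k c] c0 c1 a(1) by cases auto
qed

lemma lt1_le_c: "av x < 1 \<Longrightarrow> av x \<le> c"
proof (cases "x = 0")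
  case False
  assume a: "av x < 1"
  obtain k where k: "av x = c powi k" using val_exists[OF False] by blast
  then have "1 \<le> k" using a c_powi_less1 by simp
  then have "c powi k \<le> c powi 1" using power_int_decreasing[of 1 k c] c0 c1 by simp
  then show ?thesis using k by simp
qed (use c0 in simp)

lemma ex_pi: "\<exists>\<pi>. av \<pi> = c"
proof -
  have "c powi 1 \<in> av ` (UNIV - {0})" using vg by blast
  then show ?thesis by auto
qed

abbreviation Oi where "Oi \<equiv> ints av"

lemma ints_iff: "x \<in> Oi \<longleftrightarrow> av x \<le> 1" by (simp add: ints_def)

lemma subring_O: "subring Oi"
  unfolding subring_def sgrp_def
proof (intro conjI ballI)
  fix x y assume "x \<in> Oi" "y \<in> Oi"
  then have "av x \<le> 1" "av y \<le> 1" by (simp_all add: ints_iff)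
  then show "x - y \<in> Oi" "x * y \<in> Oi" using av_diff[of x y] av_mult[of x y]
    by (simp_all add: ints_iff mult_le_one av_nonneg)
qed (simp_all add: ints_iff)

lemma sgrp_O: "sgrp Oi" using subring_O subring_sgrp by blast

lemma div_ints: "y \<noteq> 0 \<Longrightarrow> av x \<le> av y \<Longrightarrow> x / y \<in> Oi"
  by (simp add: ints_iff av_divide av_pos)

lemma ideal_eq: "t \<noteq> 0 \<Longrightarrow> u \<noteq> 0 \<Longrightarrow> av t = av u \<Longrightarrow> ideal_of Oi t = ideal_of Oi u"
proof -
  assume a: "t \<noteq> 0" "u \<noteq> 0" "av t = av u"
  have sub: "ideal_of Oi t \<subseteq> ideal_of Oi u" if "t \<noteq> 0" "u \<noteq> 0" "av t = av u" for t u
  proof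
    fix z assume "z \<in> ideal_of Oi t"
    then obtain x where x: "x \<in> Oi" "z = t * x" by (auto simp: ideal_of_def)
    have "t / u * x \<in> Oi" using x that by (simp add: ints_iff av_mult av_divide av_pos)
    moreover have "z = u * (t / u * x)" using x that by simp
    ultimately show "z \<in> ideal_of Oi u" unfolding ideal_of_def by (rule rev_image_eqI)
  qed
  show ?thesis using sub[OF a] sub[of u t] a by (intro subset_antisym) auto
qed

lemma ideal_pi_max: "av \<pi> = c \<Longrightarrow> ideal_of Oi \<pi> = max_ideal av"
proof -
  assume pi: "av \<pi> = c"
  then have pi0: "\<pi> \<noteq> 0" using c0 by auto
  show ?thesis
  proof
    show "ideal_of Oi \<pi> \<subseteq> max_ideal av"
    proof
      fix z assume "z \<in> ideal_of Oi \<pi>"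
      then obtain x where x: "av x \<le> 1" "z = \<pi> * x" by (auto simp: ideal_of_def ints_iff)
      then have "av z \<le> c" using pi c0 av_nonneg[of x] by (simp add: av_mult mult_left_le)
      then show "z \<in> max_ideal av" using c1 by (simp add: max_ideal_def)
    qed
    show "max_ideal av \<subseteq> ideal_of Oi \<pi>"
    proof
      fix x assume "x \<in> max_ideal av"
      then have "av x \<le> av \<pi>" using lt1_le_c pi by (simp add: max_ideal_def)
      then have "x / \<pi> \<in> Oi" using div_ints pi0 by blast
      moreover have "x = \<pi> * (x / \<pi>)" using pi0 by simp
      ultimately show "x \<in> ideal_of Oi \<pi>" unfolding ideal_of_def by blast
    qed
  qed
qed

lemma fin_pi_powers:
  assumes fr: "finite_residue_field av" and pi: "av \<pi> = c"
  shows "finite (gq Oi (ideal_of Oi (\<pi> ^ k)))"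
proof (induction k)
  case 0
  have "ideal_of Oi (\<pi> ^ 0) = Oi" by (auto simp: ideal_of_def)
  moreover have "finite (gq Oi Oi)"
  proof -
    have "cls Oi Oi x = Oi" if "x \<in> Oi" for x
      unfolding cls_def using sgrp_diff[OF sgrp_O that] by blast
    then have "gq Oi Oi \<subseteq> {Oi}" unfolding gq_eq by blast
    then show ?thesis using finite_subset by blast
  qed
  ultimately show ?case by simp
next
  case (Suc k)
  have pi0: "\<pi> \<noteq> 0" using pi c0 by auto
  have piO: "\<pi> \<in> Oi" using pi c1 by (simp add: ints_iff)
  let ?N = "ideal_of Oi (\<pi> ^ Suc k)" and ?M = "ideal_of Oi (\<pi> ^ k)"
  have sN: "sgrp ?N" "sgrp ?M" using sgrp_ideal[OF sgrp_O] by blast+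
  have NM: "?N \<subseteq> ?M"
  proof
    fix z assume "z \<in> ?N"
    then obtain x where "x \<in> Oi" "z = \<pi> ^ Suc k * x" by (auto simp: ideal_of_def)
    moreover then have "\<pi> * x \<in> Oi" using piO subring_mult[OF subring_O] by blast
    ultimately show "z \<in> ?M" unfolding ideal_of_def by (auto simp: algebra_simps)
  qed
  have MO: "?M \<subseteq> Oi" by (rule ideal_sub[OF subring_O subring_power[OF subring_O piO]])
  have "card (gq Oi (ideal_of Oi \<pi>)) = card (gq ?M ?N) \<and> (finite (gq Oi (ideal_of Oi \<pi>)) \<longleftrightarrow> finite (gq ?M ?N))"
  proof (rule gq_hom[OF sN(1) _ _ _ _ sgrp_O, where \<phi> = "\<lambda>x. \<pi> ^ k * x"])
    show "x \<in> Oi \<Longrightarrow> \<pi> ^ k * x \<in> ?M" for x by (auto simp: ideal_of_def)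
    show "\<pi> ^ k * (x - y) = \<pi> ^ k * x - \<pi> ^ k * y" for x y by (simp add: algebra_simps)
    show "\<exists>g\<in>Oi. h - \<pi> ^ k * g \<in> ?N" if hM: "h \<in> ?M" for h
    proof -
      obtain g where "g \<in> Oi" "h = \<pi> ^ k * g" using hM by (auto simp: ideal_of_def)
      then show ?thesis using sgrp_0[OF sN(1)] by (intro bexI[of _ g]) simp_all
    qed
    show "\<pi> ^ k * x \<in> ?N \<longleftrightarrow> x \<in> ideal_of Oi \<pi>" if "x \<in> Oi" for x
    proof
      assume "\<pi> ^ k * x \<in> ?N"
      then obtain y where "y \<in> Oi" "\<pi> ^ k * x = \<pi> ^ Suc k * y" by (auto simp: ideal_of_def)
      then have "x = \<pi> * y" using pi0 by simp
      then show "x \<in> ideal_of Oi \<pi>" using \<open>y \<in> Oi\<close> by (auto simp: ideal_of_def)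
    next
      assume "x \<in> ideal_of Oi \<pi>"
      then obtain y where "y \<in> Oi" "x = \<pi> * y" by (auto simp: ideal_of_def)
      then show "\<pi> ^ k * x \<in> ?N" by (auto simp: ideal_of_def algebra_simps)
    qed
  qed
  moreover have "finite (gq Oi (ideal_of Oi \<pi>))"
    using fr ideal_pi_max[OF pi] unfolding finite_residue_field_def gq_def by simp
  ultimately have "finite (gq ?M ?N)" by blast
  then show ?case using gq_mult[OF sN(1) NM sN(2) MO sgrp_O Suc.IH] by blast
qed

lemma fin_ideal:
  assumes fr: "finite_residue_field av" and t: "t \<in> Oi" "t \<noteq> 0"
  shows "finite (gq Oi (ideal_of Oi t))"
proof -
  obtain \<pi> where pi: "av \<pi> = c" using ex_pi by blast
  obtain k where k: "av t = c powi k" using val_exists[OF t(2)] by blast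
  then have "0 \<le> k" using t(1) c_powi_le1 by (simp add: ints_iff)
  then have "av t = av (\<pi> ^ nat k)" using k pi by (simp add: av_power power_int_def)
  moreover have "\<pi> ^ nat k \<noteq> 0" using pi c0 by auto
  ultimately have "ideal_of Oi t = ideal_of Oi (\<pi> ^ nat k)" using ideal_eq t by blast
  then show ?thesis using fin_pi_powers[OF fr pi] by simp
qed

lemma fin_vecs:
  assumes fr: "finite_residue_field av" and t: "t \<in> Oi" "t \<noteq> 0"
  shows "finite (gq (vecs Oi :: ('n::finite \<Rightarrow> 'a) set) (smul_set t (vecs Oi)))"
proof -
  have sub: "ideal_of Oi t \<subseteq> Oi" by (rule ideal_sub[OF subring_O t(1)])
  have f: "finite (gq Oi (ideal_of Oi t))" by (rule fin_ideal[OF fr t])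
  have "finite (gq (prodset (UNIV::'n set) Oi) (prodset UNIV (ideal_of Oi t)))"
    using gq_prod[OF sgrp_ideal[OF sgrp_O] sub finite_UNIV[where 'a='n] sgrp_O] f by (rule mp[OF conjunct2])
  moreover have e: "smul_set t (vecs Oi :: ('n \<Rightarrow> 'a) set) = vecs (ideal_of Oi t)" by (rule smul_vecs)
  ultimately show ?thesis unfolding e by (simp only: vecs_prodset)
qed
end


section \<open>Field embeddings\<close>

lemma femb_add: "field_emb f \<Longrightarrow> f (x + y) = f x + f y" by (simp add: field_emb_def)
lemma femb_mult: "field_emb f \<Longrightarrow> f (x * y) = f x * f y" by (simp add: field_emb_def)
lemma femb_1: "field_emb f \<Longrightarrow> f 1 = 1" by (simp add: field_emb_def)
lemma femb_0: "field_emb f \<Longrightarrow> f 0 = 0" using femb_add[of f 0 0] by (metis add_cancel_right_right add_0)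
lemma femb_minus: "field_emb f \<Longrightarrow> f (- x) = - f x"
  using femb_add[of f x "- x"] femb_0[of f] by (metis minus_unique add.right_inverse)
lemma femb_diff: "field_emb f \<Longrightarrow> f (x - y) = f x - f y"
  using femb_add[of f x "- y"] femb_minus[of f y] by simp
lemma femb_sum: "field_emb f \<Longrightarrow> f (sum g A) = (\<Sum>a\<in>A. f (g a))"
  by (induction A rule: infinite_finite_induct) (simp_all add: femb_0 femb_add)
lemma femb_power: "field_emb f \<Longrightarrow> f (x ^ n) = f x ^ n"
  by (induction n) (simp_all add: femb_1 femb_mult)
lemma femb_inverse: "field_emb f \<Longrightarrow> f (inverse x) = inverse (f x)"
proof (cases "x = 0")
  case True then show "field_emb f \<Longrightarrow> ?thesis" by (simp add: femb_0)
next
  case False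
  assume fe: "field_emb f"
  have "f x * f (inverse x) = 1" using femb_mult[OF fe, of x "inverse x"] False femb_1[OF fe] by simp
  then show ?thesis by (metis inverse_unique)
qed
lemma femb_divide: "field_emb f \<Longrightarrow> f (x / y) = f x / f y"
  by (simp add: divide_inverse femb_mult femb_inverse)
lemma femb_eq0: "field_emb f \<Longrightarrow> f x = 0 \<longleftrightarrow> x = 0"
proof
  assume fe: "field_emb f" and "f x = 0"
  show "x = 0"
  proof (rule ccontr)
    assume "x \<noteq> 0"
    then have "f x * f (inverse x) = 1" using femb_mult[OF fe, of x "inverse x"] femb_1[OF fe] by simp
    then show False using \<open>f x = 0\<close> by simp
  qed
qed (simp add: femb_0)

lemma vs_ext: "field_emb f \<Longrightarrow> vector_space (ext_scale f)"
  unfolding vector_space_def ext_scale_def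
  by (simp add: distrib_left distrib_right femb_add femb_mult femb_1)

lemma indep_family:
  fixes f :: "'k::field \<Rightarrow> 'l::field" and w :: "'i \<Rightarrow> 'l"
  assumes fe: "field_emb f" and D: "finite D"
    and hind: "\<And>a. (\<Sum>k\<in>D. f (a k) * w k) = 0 \<Longrightarrow> \<forall>k\<in>D. a k = 0"
  shows "inj_on w D \<and> module.independent (ext_scale f) (w ` D)"
proof -
  interpret V: vector_space "ext_scale f" by (rule vs_ext[OF fe])
  have inj: "inj_on w D"
  proof (rule inj_onI, rule ccontr)
    fix k1 k2 assume k: "k1 \<in> D" "k2 \<in> D" "w k1 = w k2" "k1 \<noteq> k2"
    define a where "a k = (if k = k1 then 1 else if k = k2 then -1 else (0::'k))" for k
    have "(\<Sum>k\<in>D. f (a k) * w k) = (\<Sum>k\<in>D. (if k = k1 then w k1 else 0) + (if k = k2 then - w k2 else 0))"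
      using k(4) by (intro sum.cong) (auto simp: a_def femb_1[OF fe] femb_0[OF fe] femb_minus[OF fe])
    also have "\<dots> = w k1 - w k2" using k D by (simp add: sum.distrib)
    finally have "(\<Sum>k\<in>D. f (a k) * w k) = 0" using k(3) by simp
    then have "a k1 = 0" using hind k(1) by blast
    then show False by (simp add: a_def)
  qed
  have "\<not> V.dependent (w ` D)"
  proof
    assume "V.dependent (w ` D)"
    then obtain u where u: "\<exists>v\<in>w ` D. u v \<noteq> 0" "(\<Sum>v\<in>w ` D. ext_scale f (u v) v) = 0"
      using V.dependent_finite[of "w ` D"] D by blast
    have "(\<Sum>k\<in>D. f (u (w k)) * w k) = 0"
      using u(2) sum.reindex[OF inj, of "\<lambda>v. ext_scale f (u v) v"] by (simp add: ext_scale_def)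
    then have "\<forall>k\<in>D. u (w k) = 0" using hind[of "\<lambda>k. u (w k)"] by blast
    then show False using u(1) by blast
  qed
  then show ?thesis using inj by simp
qed

lemma indep_bound:
  fixes f :: "'k::field \<Rightarrow> 'l::field"
  assumes fx: "finite_ext f" and ind: "module.independent (ext_scale f) S"
  shows "finite S \<and> card S \<le> ext_degree f"
proof -
  have fe: "field_emb f" using fx by (simp add: finite_ext_def)
  interpret V: vector_space "ext_scale f" by (rule vs_ext[OF fe])
  obtain B0 where B0: "finite B0" "V.span B0 = UNIV" using fx by (auto simp: finite_ext_def)
  obtain B where B: "V.independent B" "UNIV \<subseteq> V.span B" "card B = V.dim UNIV"
    using V.basis_exists[of UNIV] by metis
  have fB: "finite B" using V.independent_span_bound[OF B0(1) B(1)] B0(2) by simp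
  have "finite S \<and> card S \<le> card B" using V.independent_span_bound[OF fB ind] B(2) by blast
  then show ?thesis using B(3) by (simp add: ext_degree_def)
qed

lemma basis_dim:
  fixes f :: "'k::field \<Rightarrow> 'l::field" and w :: "'i \<Rightarrow> 'l"
  assumes fe: "field_emb f" and D: "finite D"
    and hind: "\<And>a. (\<Sum>k\<in>D. f (a k) * w k) = 0 \<Longrightarrow> \<forall>k\<in>D. a k = 0"
    and span: "\<And>x. \<exists>a. x = (\<Sum>k\<in>D. f (a k) * w k)"
  shows "card D = ext_degree f"
proof -
  interpret V: vector_space "ext_scale f" by (rule vs_ext[OF fe])
  have i: "inj_on w D \<and> V.independent (w ` D)" by (rule indep_family[OF fe D hind])
  have "V.span (w ` D) = UNIV"
  proof -
    have "x \<in> V.span (w ` D)" for x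
    proof -
      obtain a where a: "x = (\<Sum>k\<in>D. f (a k) * w k)" using span by blast
      have "(\<Sum>k\<in>D. ext_scale f (a k) (w k)) \<in> V.span (w ` D)"
        by (intro V.span_sum V.span_scale V.span_base) simp
      then show ?thesis using a by (simp add: ext_scale_def)
    qed
    then show ?thesis by blast
  qed
  then have "V.dim UNIV = card (w ` D)" using V.dim_eq_card[of "w ` D" UNIV] i V.span_UNIV by simp
  then show ?thesis using i card_image by (metis ext_degree_def)
qed

context dval
begin

lemma argmax_fin:
  fixes g :: "'i \<Rightarrow> real"
  assumes "finite J" "J \<noteq> {}"
  shows "\<exists>j\<in>J. \<forall>i\<in>J. g i \<le> g j"
proof -
  have "Max (g ` J) \<in> g ` J" using assms by simp
  then obtain j where "j \<in> J" "g j = Max (g ` J)" by auto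
  moreover have "\<forall>i\<in>J. g i \<le> Max (g ` J)" using assms by simp
  ultimately show ?thesis by metis
qed

lemma ultra_max:
  assumes J: "finite J"
    and dist: "\<And>j1 j2. j1 \<in> J \<Longrightarrow> j2 \<in> J \<Longrightarrow> j1 \<noteq> j2 \<Longrightarrow> av (X j1) = av (X j2) \<Longrightarrow> av (X j1) = 0"
    and j: "j \<in> J"
  shows "av (X j) \<le> av (sum X J)"
proof -
  obtain jm where jm: "jm \<in> J" "\<forall>i\<in>J. av (X i) \<le> av (X jm)"
    using argmax_fin[OF J, of "\<lambda>i. av (X i)"] j by blast
  show ?thesis
  proof (cases "av (X jm) = 0")
    case True
    then have "av (X j) \<le> 0" using jm j by metis
    then show ?thesis using av_nonneg[of "sum X J"] by linarith
  next
    case False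
    then have pos: "0 < av (X jm)" using av_nonneg[of "X jm"] by linarith
    have lt: "av (X i) < av (X jm)" if "i \<in> J - {jm}" for i
    proof -
      have "av (X i) \<le> av (X jm)" using jm that by blast
      moreover have "av (X i) \<noteq> av (X jm)" using dist[of i jm] that jm(1) False by auto
      ultimately show ?thesis by linarith
    qed
    have "av (sum X (J - {jm})) < av (X jm)" by (rule av_sum_less[OF pos lt])
    then have "av (sum X (J - {jm}) + X jm) = av (X jm)" by (rule av_add_strict)
    moreover have "sum X J = X jm + sum X (J - {jm})" using sum.remove[OF J jm(1)] by simp
    ultimately have "av (sum X J) = av (X jm)" by (simp add: add.commute)
    then show ?thesis using jm j by simp
  qed
qed

end

locale lext = K: dval avK cK + L: dval avL cL
  for avK :: "'k::field \<Rightarrow> real" and cK and avL :: "'l::field \<Rightarrow> real" and cL +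
  fixes f :: "'k \<Rightarrow> 'l" and p :: 'k and s :: real
  assumes femb: "field_emb f" and s0: "0 < s" and comp: "\<And>a. avL (f a) = avK a powr s"
    and pK: "avK p = cK" and cpl: "complete_abs avK" and fext: "finite_ext f"
begin

lemma avf_le: "avK a \<le> avK b \<Longrightarrow> avL (f a) \<le> avL (f b)"
  unfolding comp by (rule powr_mono2) (use s0 K.av_nonneg in auto)
lemma avf_less: "avK a < avK b \<Longrightarrow> avL (f a) < avL (f b)"
  unfolding comp by (rule powr_less_mono2) (use s0 K.av_nonneg in auto)
lemma avf_le_iff: "avL (f a) \<le> avL (f b) \<longleftrightarrow> avK a \<le> avK b"
  using avf_le avf_less[of b a] by force
lemma avf_less_iff: "avL (f a) < avL (f b) \<longleftrightarrow> avK a < avK b"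
  using avf_less avf_le[of b a] by force
lemma avf_1: "avL (f 1) = 1" by (simp add: femb_1[OF femb])
lemma f_O: "f a \<in> L.Oi \<longleftrightarrow> a \<in> K.Oi"
  using avf_le_iff[of a 1] by (simp add: L.ints_iff K.ints_iff avf_1)
lemma f_lt1: "avL (f a) < 1 \<longleftrightarrow> avK a < 1"
  using avf_less_iff[of a 1] by (simp add: avf_1)

lemma p0: "p \<noteq> 0" using pK K.c0 by auto
lemma pO: "p \<in> K.Oi" using pK K.c1 by (simp add: K.ints_iff)
lemma fp0: "f p \<noteq> 0" using p0 femb_eq0[OF femb] by simp

definition q where "q = avL (f p)"
lemma q_pos: "0 < q" unfolding q_def using L.av_pos fp0 by simp
lemma q_lt1: "q < 1" unfolding q_def using f_lt1 pK K.c1 by simp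
lemma q_eq: "q = cK powr s" unfolding q_def comp pK ..

definition E :: int where "E = (SOME e::int. 0 < e \<and> q = cL powi e)"
lemma E_prop: "0 < E \<and> q = cL powi E"
proof -
  obtain e where e: "avL (f p) = cL powi e" using L.val_exists[OF fp0] by blast
  then have "0 < e" using q_lt1 L.c_powi_less1 by (simp add: q_def)
  then have "\<exists>e::int. 0 < e \<and> q = cL powi e" using e q_def by (intro exI[of _ e]) simp
  then show ?thesis unfolding E_def by (rule someI_ex)
qed
lemma E_pos: "0 < E" using E_prop by simp
lemma q_E: "q = cL powi E" using E_prop by simp

lemma val_f:
  assumes a: "a \<noteq> 0"
  shows "\<exists>k::int. avK a = cK powi k \<and> avL (f a) = cL powi (E * k)"
proof -
  obtain k where k: "avK a = cK powi k" using K.val_exists[OF a] by blast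
  have "avL (f a) = (cK powr real_of_int k) powr s"
    unfolding comp k using powr_real_of_int'[of cK k] K.c0 by simp
  also have "\<dots> = (cK powr s) powr real_of_int k" by (simp add: powr_powr mult.commute)
  also have "\<dots> = q powi k" using powr_real_of_int'[of q k] q_pos q_eq by simp
  also have "\<dots> = cL powi (E * k)" by (simp add: q_E power_int_mult)
  finally show ?thesis using k by blast
qed

definition resind :: "(nat \<Rightarrow> 'l) \<Rightarrow> nat \<Rightarrow> bool" where
  "resind u F \<longleftrightarrow> (\<forall>i<F. u i \<in> L.Oi) \<and>
     (\<forall>a. (\<forall>i<F. a i \<in> K.Oi) \<longrightarrow> avL (\<Sum>i<F. f (a i) * u i) < 1 \<longrightarrow> (\<forall>i<F. avK (a i) < 1))"

lemma layer:
  assumes r: "resind u F" and i0: "i0 < F"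
  shows "avL (f (a i0)) \<le> avL (\<Sum>i<F. f (a i) * u i)"
proof (rule ccontr)
  let ?S = "\<Sum>i<F. f (a i) * u i"
  assume "\<not> ?thesis"
  then have lt: "avL ?S < avL (f (a i0))" by simp
  obtain i1 where i1: "i1 \<in> {..<F}" "\<forall>i\<in>{..<F}. avK (a i) \<le> avK (a i1)"
    using K.argmax_fin[of "{..<F}" "\<lambda>i. avK (a i)"] i0 by auto
  have le01: "avL (f (a i0)) \<le> avL (f (a i1))" using i1 i0 avf_le by simp
  have a1: "a i1 \<noteq> 0"
  proof
    assume "a i1 = 0"
    then have "avL (f (a i1)) = 0" by (simp add: femb_0[OF femb])
    then show False using le01 lt L.av_nonneg[of ?S] by linarith
  qed
  define b where "b i = a i / a i1" for i
  have bO: "\<forall>i<F. b i \<in> K.Oi" using i1 a1 K.div_ints by (simp add: b_def)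
  have "(\<Sum>i<F. f (b i) * u i) = ?S / f (a i1)"
    by (simp add: b_def femb_divide[OF femb] sum_divide_distrib)
  moreover have "avL (?S / f (a i1)) < 1"
  proof -
    have "0 < avL (f (a i1))" using lt le01 L.av_nonneg[of ?S] by linarith
    then show ?thesis using lt le01 by (simp add: L.av_divide)
  qed
  ultimately have "avK (b i1) < 1" using r bO i1 unfolding resind_def by auto
  then show False using a1 by (simp add: b_def)
qed

lemma layer_eq:
  assumes r: "resind u F" and F: "0 < F"
  shows "\<exists>i1<F. avL (\<Sum>i<F. f (a i) * u i) = avL (f (a i1)) \<and> (\<forall>i<F. avL (f (a i)) \<le> avL (f (a i1)))"
proof -
  obtain i1 where i1: "i1 \<in> {..<F}" "\<forall>i\<in>{..<F}. avK (a i) \<le> avK (a i1)"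
    using K.argmax_fin[of "{..<F}" "\<lambda>i. avK (a i)"] F by auto
  have le: "\<forall>i<F. avL (f (a i)) \<le> avL (f (a i1))" using i1 avf_le by simp
  have "avL (\<Sum>i<F. f (a i) * u i) \<le> avL (f (a i1))"
  proof (rule L.av_sum_le)
    show "0 \<le> avL (f (a i1))" by (rule L.av_nonneg)
    fix i assume "i \<in> {..<F}"
    then have "avL (u i) \<le> 1" "avL (f (a i)) \<le> avL (f (a i1))" using r le by (auto simp: resind_def L.ints_iff)
    then show "avL (f (a i) * u i) \<le> avL (f (a i1))"
      using L.av_nonneg[of "f (a i)"] L.av_nonneg[of "u i"] by (simp add: L.av_mult mult_le_one order_trans[OF mult_left_le])
  qed
  moreover have "avL (f (a i1)) \<le> avL (\<Sum>i<F. f (a i) * u i)" using layer[OF r] i1 by simp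
  ultimately show ?thesis using i1 le by (intro exI[of _ i1]) auto
qed

lemma layer_zero:
  assumes r: "resind u F" and z: "(\<Sum>i<F. f (a i) * u i) = 0"
  shows "\<forall>i<F. a i = 0"
proof (intro allI impI)
  fix i assume "i < F"
  then have "avL (f (a i)) \<le> 0" using layer[OF r, of i a] z by simp
  then have "f (a i) = 0" using L.av_nonneg[of "f (a i)"] L.av_eq0 by (metis antisym)
  then show "a i = 0" using femb_eq0[OF femb] by simp
qed

lemma resind_bound: "resind u F \<Longrightarrow> F \<le> ext_degree f"
proof -
  assume r: "resind u F"
  have "inj_on u {..<F} \<and> module.independent (ext_scale f) (u ` {..<F})"
    by (rule indep_family[OF femb]) (use layer_zero[OF r] in auto)
  then show ?thesis using indep_bound[OF fext, of "u ` {..<F}"] card_image by fastforce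
qed

lemma resind_0: "resind u 0" by (simp add: resind_def)

definition Fm :: nat where "Fm = (GREATEST F. \<exists>u. resind u F)"
definition uu :: "nat \<Rightarrow> 'l" where "uu = (SOME u. resind u Fm)"

lemma uu_resind: "resind uu Fm"
proof -
  have "\<exists>u. resind u Fm" unfolding Fm_def
    by (rule GreatestI_nat[of _ 0 "ext_degree f"]) (use resind_0 resind_bound in auto)
  then show ?thesis unfolding uu_def by (rule someI_ex)
qed

lemma Fm_max: "resind u F \<Longrightarrow> F \<le> Fm"
  unfolding Fm_def by (rule Greatest_le_nat[of _ F "ext_degree f"]) (use resind_bound in auto)

lemma resind_ext:
  assumes r: "resind u F" and y: "y \<in> L.Oi"
    and no: "\<And>a. \<forall>i<F. a i \<in> K.Oi \<Longrightarrow> \<not> avL (y - (\<Sum>i<F. f (a i) * u i)) < 1"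
  shows "resind (u(F := y)) (Suc F)"
  unfolding resind_def
proof (intro conjI allI impI)
  let ?u = "u(F := y)"
  fix i assume "i < Suc F"
  then show "?u i \<in> L.Oi" using r y by (auto simp: resind_def less_Suc_eq)
next
  let ?u = "u(F := y)"
  fix a i assume aO: "\<forall>i<Suc F. a i \<in> K.Oi" and small: "avL (\<Sum>i<Suc F. f (a i) * ?u i) < 1" and i: "i < Suc F"
  have sp: "(\<Sum>i<Suc F. f (a i) * ?u i) = (\<Sum>i<F. f (a i) * u i) + f (a F) * y"
    by (simp add: sum.lessThan_Suc)
  show "avK (a i) < 1"
  proof (cases "avK (a F) < 1")
    case True
    have "avL (f (a F) * y) < 1"
    proof -
      have "avL (f (a F)) < 1" using True f_lt1 by simp
      moreover have "avL y \<le> 1" using y by (simp add: L.ints_iff)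
      ultimately show ?thesis using L.av_nonneg[of "f (a F)"] L.av_nonneg[of y]
        by (simp add: L.av_mult) (meson le_less_trans mult_left_le)
    qed
    then have "avL ((\<Sum>i<Suc F. f (a i) * ?u i) - f (a F) * y) < 1"
      using small L.av_diff[of "\<Sum>i<Suc F. f (a i) * ?u i" "f (a F) * y"] by simp
    then have "avL (\<Sum>i<F. f (a i) * u i) < 1" using sp by simp
    then have "\<forall>i<F. avK (a i) < 1" using r aO unfolding resind_def by simp
    then show ?thesis using True i less_Suc_eq by auto
  next
    case False
    have "avK (a F) \<le> 1" using aO by (simp add: K.ints_iff)
    then have aF1: "avK (a F) = 1" using False by linarith
    then have aF0: "a F \<noteq> 0" by auto
    define b where "b i = - a i / a F" for i
    have bO: "\<forall>i<F. b i \<in> K.Oi"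
    proof (intro allI impI)
      fix i assume "i < F"
      then have "avK (- a i) \<le> avK (a F)" using aO aF1 by (simp add: K.ints_iff)
      then show "b i \<in> K.Oi" unfolding b_def by (rule K.div_ints[OF aF0])
    qed
    have "y - (\<Sum>i<F. f (b i) * u i) = (\<Sum>i<Suc F. f (a i) * ?u i) / f (a F)"
    proof -
      have fa: "f (a F) \<noteq> 0" using aF0 femb_eq0[OF femb] by simp
      have "(\<Sum>i<F. f (b i) * u i) = - (\<Sum>i<F. f (a i) * u i) / f (a F)"
        by (simp add: b_def femb_divide[OF femb] femb_minus[OF femb] sum_divide_distrib sum_negf)
      then show ?thesis using sp fa by (simp add: field_simps)
    qed
    moreover have "avL (f (a F)) = 1" using aF1 comp by simp
    ultimately have "avL (y - (\<Sum>i<F. f (b i) * u i)) < 1" using small by (simp add: L.av_divide)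
    then show ?thesis using no[OF bO] by blast
  qed
qed

lemma max_span:
  assumes y: "y \<in> L.Oi"
  shows "\<exists>a. (\<forall>i<Fm. a i \<in> K.Oi) \<and> avL (y - (\<Sum>i<Fm. f (a i) * uu i)) < 1"
proof (rule ccontr)
  assume "\<not> ?thesis"
  then have "resind (uu(Fm := y)) (Suc Fm)" using resind_ext[OF uu_resind y] by blast
  then show False using Fm_max by fastforce
qed

end


lemma layer_alg:
  fixes c :: "'a::field"
  assumes "c \<noteq> 0"
  shows "((x - P) / c ^ J - B) / c = (x - (P + B * c ^ J)) / c ^ Suc J"
proof -
  have "(x - (P + B * c ^ J)) / c ^ Suc J = ((x - P) - B * c ^ J) / (c ^ J * c)"
    by (simp add: algebra_simps)
  also have "\<dots> = ((x - P) / c ^ J - B) / c"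
    using assms by (simp add: diff_divide_distrib)
  finally show ?thesis by simp
qed

context lext
begin

definition piL :: 'l where "piL = (SOME \<pi>. avL \<pi> = cL)"
lemma piL: "avL piL = cL" unfolding piL_def using L.ex_pi by (rule someI_ex)
lemma piL0: "piL \<noteq> 0" using piL L.c0 by auto
lemma piLO: "piL \<in> L.Oi" using piL L.c1 by (simp add: L.ints_iff)

definition eN :: nat where "eN = nat E"
lemma eN: "int eN = E" using E_pos by (simp add: eN_def)

definition D :: "(nat \<times> nat) set" where "D = {..<Fm} \<times> {..<eN}"
definition w :: "nat \<times> nat \<Rightarrow> 'l" where "w k = uu (fst k) * piL ^ (snd k)"
definition W :: "(nat \<times> nat \<Rightarrow> 'k) \<Rightarrow> 'l" where "W a = (\<Sum>k\<in>D. f (a k) * w k)"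

lemma finD: "finite D" by (simp add: D_def)

lemma uuO: "i < Fm \<Longrightarrow> uu i \<in> L.Oi" using uu_resind by (simp add: resind_def)

lemma w_O: "k \<in> D \<Longrightarrow> w k \<in> L.Oi"
  unfolding w_def D_def
  using uuO piLO subring_mult[OF L.subring_O] subring_power[OF L.subring_O] by auto

lemma W_split: "W a = (\<Sum>j<eN. (\<Sum>i<Fm. f (a (i, j)) * uu i) * piL ^ j)"
proof -
  have "W a = (\<Sum>(i, j)\<in>{..<Fm} \<times> {..<eN}. f (a (i, j)) * (uu i * piL ^ j))"
    unfolding W_def D_def w_def by (intro sum.cong) auto
  also have "\<dots> = (\<Sum>i<Fm. \<Sum>j<eN. f (a (i, j)) * (uu i * piL ^ j))"
    by (rule sum.cartesian_product[symmetric])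
  also have "\<dots> = (\<Sum>j<eN. \<Sum>i<Fm. f (a (i, j)) * (uu i * piL ^ j))"
    by (rule sum.swap)
  also have "\<dots> = (\<Sum>j<eN. (\<Sum>i<Fm. f (a (i, j)) * uu i) * piL ^ j)"
    by (simp add: sum_distrib_right mult.assoc)
  finally show ?thesis .
qed

lemma W_add: "W (\<lambda>k. a k + b k) = W a + W b"
  by (simp add: W_def femb_add[OF femb] distrib_right sum.distrib)
lemma W_diff: "W (\<lambda>k. a k - b k) = W a - W b"
  by (simp add: W_def femb_diff[OF femb] left_diff_distrib sum_subtractf)
lemma W_scale: "f c * W a = W (\<lambda>k. c * a k)"
  by (simp add: W_def femb_mult[OF femb] sum_distrib_left mult.assoc)
lemma W_zero: "W (\<lambda>k. 0) = 0"
  by (simp add: W_def femb_0[OF femb])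

lemma W_in: "(\<And>k. k \<in> D \<Longrightarrow> a k \<in> K.Oi) \<Longrightarrow> W a \<in> L.Oi"
  unfolding W_def
  by (intro sgrp_sum[OF L.sgrp_O] subring_mult[OF L.subring_O]) (auto simp: f_O w_O)

lemma exp_distinct:
  fixes k1 k2 :: int
  assumes "E * k1 + int j1 = E * k2 + int j2" "j1 < eN" "j2 < eN"
  shows "j1 = j2"
proof (rule ccontr)
  assume ne: "j1 \<noteq> j2"
  have j: "int j1 < E" "int j2 < E" using assms(2,3) eN by linarith+
  have "k1 \<noteq> k2" using assms(1) ne by auto
  then consider "k1 + 1 \<le> k2" | "k2 + 1 \<le> k1" by linarith
  then show False
  proof cases
    case 1
    then have "E * (k1 + 1) \<le> E * k2" using E_pos by (intro mult_left_mono) auto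
    then show False using assms(1) j by (simp add: algebra_simps)
  next
    case 2
    then have "E * (k2 + 1) \<le> E * k1" using E_pos by (intro mult_left_mono) auto
    then show False using assms(1) j by (simp add: algebra_simps)
  qed
qed

lemma Xval:
  assumes "avL ((\<Sum>i<Fm. f (a (i, j)) * uu i) * piL ^ j) \<noteq> 0"
  shows "\<exists>k::int. avL ((\<Sum>i<Fm. f (a (i, j)) * uu i) * piL ^ j) = cL powi (E * k + int j)"
proof -
  let ?S = "\<Sum>i<Fm. f (a (i, j)) * uu i"
  have S0: "?S \<noteq> 0"
  proof
    assume "?S = 0"
    then show False using assms by simp
  qed
  have "Fm \<noteq> 0"
  proof
    assume "Fm = 0"
    then have "?S = 0" by simp
    then show False using S0 by blast
  qed
  then have "0 < Fm" by simp
  then obtain i1 where i1: "i1 < Fm" "avL ?S = avL (f (a (i1, j)))"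
    using layer_eq[OF uu_resind, of "\<lambda>i. a (i, j)"] by blast
  have "avL ?S \<noteq> 0" using S0 L.av_eq0 by blast
  then have "f (a (i1, j)) \<noteq> 0" using i1(2) by (metis L.av_0)
  then have "a (i1, j) \<noteq> 0" using femb_0[OF femb] by metis
  then obtain k where k: "avL (f (a (i1, j))) = cL powi (E * k)" using val_f by blast
  have "avL (?S * piL ^ j) = avL ?S * cL ^ j" by (simp add: L.av_mult L.av_power piL)
  also have "\<dots> = cL powi (E * k) * cL powi (int j)" using i1(2) k by (simp add: power_int_of_nat)
  also have "\<dots> = cL powi (E * k + int j)" using L.c0 by (simp add: power_int_add)
  finally show ?thesis by blast
qed

lemma ortho:
  assumes k: "k \<in> D"
  shows "avL (f (a k)) * cL ^ snd k \<le> avL (W a)"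
proof -
  obtain i j where ij: "k = (i, j)" "i < Fm" "j < eN" using k by (auto simp: D_def)
  define X where "X j = (\<Sum>i<Fm. f (a (i, j)) * uu i) * piL ^ j" for j
  have WX: "W a = sum X {..<eN}" by (simp add: W_split X_def)
  have avX: "avL (X j) = avL (\<Sum>i<Fm. f (a (i, j)) * uu i) * cL ^ j" for j
    by (simp add: X_def L.av_mult L.av_power piL)
  have "avL (f (a (i, j))) \<le> avL (\<Sum>i<Fm. f (a (i, j)) * uu i)"
    using layer[OF uu_resind ij(2), of "\<lambda>i. a (i, j)"] by simp
  then have "avL (f (a (i, j))) * cL ^ j \<le> avL (X j)"
    using avX L.c0 by (simp add: mult_right_mono)
  also have "avL (X j) \<le> avL (sum X {..<eN})"
  proof (rule L.ultra_max)
    show "j \<in> {..<eN}" using ij by simp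
    fix j1 j2 assume j12: "j1 \<in> {..<eN}" "j2 \<in> {..<eN}" "j1 \<noteq> j2" "avL (X j1) = avL (X j2)"
    show "avL (X j1) = 0"
    proof (rule ccontr)
      assume nz: "avL (X j1) \<noteq> 0"
      then obtain k1 where k1: "avL (X j1) = cL powi (E * k1 + int j1)"
        using Xval[of a j1] unfolding X_def by blast
      have "avL (X j2) \<noteq> 0" using nz j12 by simp
      then obtain k2 where k2: "avL (X j2) = cL powi (E * k2 + int j2)"
        using Xval[of a j2] unfolding X_def by blast
      have "E * k1 + int j1 = E * k2 + int j2" using k1 k2 j12(4) L.c_powi_inj by simp
      then show False using exp_distinct j12 by auto
    qed
  qed simp
  finally show ?thesis using ij WX by simp
qed

lemma W_indep: "W a = 0 \<Longrightarrow> \<forall>k\<in>D. a k = 0"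
proof
  fix k assume W0: "W a = 0" and k: "k \<in> D"
  have "avL (f (a k)) * cL ^ snd k \<le> 0" using ortho[OF k, of a] W0 by simp
  moreover have "0 < cL ^ snd k" using L.c0 by simp
  ultimately have "avL (f (a k)) \<le> 0" by (simp add: mult_le_0_iff)
  then have "f (a k) = 0" using L.av_nonneg[of "f (a k)"] L.av_eq0 by (metis antisym)
  then show "a k = 0" using femb_eq0[OF femb] by simp
qed

lemma W_O: "W a \<in> L.Oi \<Longrightarrow> \<forall>k\<in>D. a k \<in> K.Oi"
proof
  fix k assume WO: "W a \<in> L.Oi" and k: "k \<in> D"
  obtain i j where ij: "k = (i, j)" "i < Fm" "j < eN" using k by (auto simp: D_def)
  show "a k \<in> K.Oi"
  proof (cases "a k = 0")
    case True then show ?thesis using sgrp_0[OF K.sgrp_O] by simp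
  next
    case False
    obtain m where m: "avK (a k) = cK powi m" "avL (f (a k)) = cL powi (E * m)" using val_f[OF False] by blast
    have "avL (f (a k)) * cL ^ j \<le> 1" using ortho[OF k, of a] WO ij by (simp add: L.ints_iff)
    moreover have "avL (f (a k)) * cL ^ j = cL powi (E * m + int j)"
      using m L.c0 by (simp add: power_int_add power_int_of_nat)
    ultimately have "0 \<le> E * m + int j" using L.c_powi_le1 by simp
    moreover have "int j < E" using ij eN by linarith
    ultimately have "0 \<le> m"
    proof -
      assume a1: "0 \<le> E * m + int j" and a2: "int j < E"
      show "0 \<le> m"
      proof (rule ccontr)
        assume "\<not> 0 \<le> m"
        then have "m \<le> -1" by simp
        then have "E * m \<le> E * (-1)" using E_pos by (intro mult_left_mono) auto
        then show False using a1 a2 by simp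
      qed
    qed
    then show ?thesis using m K.c_powi_le1 by (simp add: K.ints_iff)
  qed
qed

lemma layers:
  assumes x: "x \<in> L.Oi"
  shows "\<exists>a. (\<forall>i<Fm. \<forall>j<J. a (i, j) \<in> K.Oi) \<and>
    (x - (\<Sum>j<J. (\<Sum>i<Fm. f (a (i, j)) * uu i) * piL ^ j)) / piL ^ J \<in> L.Oi"
proof (induction J)
  case 0
  have "(x - (\<Sum>j<0. (\<Sum>i<Fm. f 0 * uu i) * piL ^ j)) / piL ^ 0 \<in> L.Oi" using x by simp
  then show ?case by (intro exI[of _ "\<lambda>_. 0"] conjI) auto
next
  case (Suc J)
  then obtain a where a: "\<forall>i<Fm. \<forall>j<J. a (i, j) \<in> K.Oi"
    and r: "(x - (\<Sum>j<J. (\<Sum>i<Fm. f (a (i, j)) * uu i) * piL ^ j)) / piL ^ J \<in> L.Oi" by blast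
  let ?P = "\<Sum>j<J. (\<Sum>i<Fm. f (a (i, j)) * uu i) * piL ^ j"
  let ?r = "(x - ?P) / piL ^ J"
  obtain b where b: "\<forall>i<Fm. b i \<in> K.Oi" "avL (?r - (\<Sum>i<Fm. f (b i) * uu i)) < 1"
    using max_span[OF r] by blast
  define a' where "a' ij = (if snd ij = J then b (fst ij) else a ij)" for ij
  have a'O: "\<forall>i<Fm. \<forall>j<Suc J. a' (i, j) \<in> K.Oi"
  proof (intro allI impI)
    fix i j assume "i < Fm" "j < Suc J"
    then show "a' (i, j) \<in> K.Oi" using a b unfolding a'_def by (cases "j = J") auto
  qed
  have c1: "(\<Sum>j<J. (\<Sum>i<Fm. f (a' (i, j)) * uu i) * piL ^ j) = ?P"
    by (intro sum.cong refl) (simp add: a'_def)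
  have c2: "(\<Sum>i<Fm. f (a' (i, J)) * uu i) = (\<Sum>i<Fm. f (b i) * uu i)" by (simp add: a'_def)
  have P': "(\<Sum>j<Suc J. (\<Sum>i<Fm. f (a' (i, j)) * uu i) * piL ^ j) = ?P + (\<Sum>i<Fm. f (b i) * uu i) * piL ^ J"
    by (simp only: sum.lessThan_Suc c1 c2)
  have "(?r - (\<Sum>i<Fm. f (b i) * uu i)) / piL \<in> L.Oi"
  proof -
    have "avL (?r - (\<Sum>i<Fm. f (b i) * uu i)) \<le> avL piL" using L.lt1_le_c b(2) piL by simp
    then show ?thesis by (rule L.div_ints[OF piL0])
  qed
  moreover have "(?r - (\<Sum>i<Fm. f (b i) * uu i)) / piL
      = (x - (\<Sum>j<Suc J. (\<Sum>i<Fm. f (a' (i, j)) * uu i) * piL ^ j)) / piL ^ Suc J"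
    unfolding P' by (rule layer_alg[OF piL0])
  ultimately have "(x - (\<Sum>j<Suc J. (\<Sum>i<Fm. f (a' (i, j)) * uu i) * piL ^ j)) / piL ^ Suc J \<in> L.Oi"
    by simp
  then show ?case using a'O by (intro exI[of _ a'] conjI)
qed

lemma modp:
  assumes x: "x \<in> L.Oi"
  shows "\<exists>a. (\<forall>k\<in>D. a k \<in> K.Oi) \<and> (x - W a) / f p \<in> L.Oi"
proof -
  obtain a where a: "\<forall>i<Fm. \<forall>j<eN. a (i, j) \<in> K.Oi"
    and r: "(x - W a) / piL ^ eN \<in> L.Oi" using layers[OF x, of eN] unfolding W_split by blast
  have aD: "\<forall>k\<in>D. a k \<in> K.Oi" using a by (auto simp: D_def)
  have "avL (piL ^ eN) = cL ^ eN" by (simp add: L.av_power piL)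
  also have "\<dots> = cL powi (int eN)" by (rule power_int_of_nat[symmetric])
  also have "\<dots> = avL (f p)" using q_E eN by (simp add: q_def)
  finally have "avL (piL ^ eN) = avL (f p)" .
  then have u: "piL ^ eN / f p \<in> L.Oi" by (simp add: L.ints_iff L.av_divide L.av_pos fp0)
  have e: "(x - W a) / f p = (x - W a) / piL ^ eN * (piL ^ eN / f p)" using piL0 by simp
  have "(x - W a) / piL ^ eN * (piL ^ eN / f p) \<in> L.Oi" by (rule subring_mult[OF L.subring_O r u])
  then have "(x - W a) / f p \<in> L.Oi" by (simp only: e)
  then show ?thesis using aD by blast
qed

end


context lext
begin

lemma span_OL:
  assumes x0: "x0 \<in> L.Oi"
  shows "\<exists>a. (\<forall>k\<in>D. a k \<in> K.Oi) \<and> x0 = W a"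
proof -
  have "\<forall>x. \<exists>a. x \<in> L.Oi \<longrightarrow> (\<forall>k\<in>D. a k \<in> K.Oi) \<and> (x - W a) / f p \<in> L.Oi"
    using modp by blast
  then obtain A where A: "\<And>x. x \<in> L.Oi \<Longrightarrow> (\<forall>k\<in>D. A x k \<in> K.Oi) \<and> (x - W (A x)) / f p \<in> L.Oi"
    by metis
  define R where "R x = (x - W (A x)) / f p" for x
  define xs where "xs = rec_nat x0 (\<lambda>_ y. R y)"
  have xs0: "xs 0 = x0" by (simp add: xs_def)
  have xsS: "xs (Suc n) = R (xs n)" for n by (simp add: xs_def)
  have xsO: "xs n \<in> L.Oi" for n
  proof (induction n)
    case 0 then show ?case using x0 xs0 by simp
  next
    case (Suc n) then show ?case using A[of "xs n"] by (simp add: xsS R_def)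
  qed
  have AO: "k \<in> D \<Longrightarrow> A (xs n) k \<in> K.Oi" for k n using A[OF xsO] by blast
  have rec: "xs n = W (A (xs n)) + f p * xs (Suc n)" for n
    using fp0 by (simp add: xsS R_def)
  define C where "C n k = (\<Sum>m<n. p ^ m * A (xs m) k)" for n k
  have CS: "C (Suc n) k = C n k + p ^ n * A (xs n) k" for n k by (simp add: C_def)
  have ident: "x0 = W (C n) + f p ^ n * xs n" for n
  proof (induction n)
    case 0
    have "C 0 = (\<lambda>k. 0)" by (simp add: C_def fun_eq_iff)
    then show ?case using xs0 W_zero by simp
  next
    case (Suc n)
    have "f p ^ n * xs n = f p ^ n * (W (A (xs n)) + f p * xs (Suc n))"
      by (rule arg_cong[where f = "\<lambda>z. f p ^ n * z"]) (rule rec)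
    also have "\<dots> = f p ^ n * W (A (xs n)) + f p ^ Suc n * xs (Suc n)"
      by (simp add: algebra_simps)
    finally have "f p ^ n * xs n = f p ^ n * W (A (xs n)) + f p ^ Suc n * xs (Suc n)" .
    also have "f p ^ n * W (A (xs n)) = W (\<lambda>k. p ^ n * A (xs n) k)"
      using W_scale[of "p ^ n"] by (simp add: femb_power[OF femb])
    finally have "x0 = W (C n) + W (\<lambda>k. p ^ n * A (xs n) k) + f p ^ Suc n * xs (Suc n)"
      using Suc.IH by (simp add: algebra_simps)
    also have "W (C n) + W (\<lambda>k. p ^ n * A (xs n) k) = W (C (Suc n))"
    proof -
      have "C (Suc n) = (\<lambda>k. C n k + p ^ n * A (xs n) k)" using CS by (simp add: fun_eq_iff)
      then show ?thesis using W_add[of "C n" "\<lambda>k. p ^ n * A (xs n) k"] by simp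
    qed
    finally show ?case .
  qed
  have pnO: "p ^ n \<in> K.Oi" for n by (rule subring_power[OF K.subring_O pO])
  have CO: "k \<in> D \<Longrightarrow> C n k \<in> K.Oi" for k n
    unfolding C_def by (intro sgrp_sum[OF K.sgrp_O] subring_mult[OF K.subring_O pnO AO])
  have avpA: "avK (p ^ m * A (xs m) k) \<le> cK ^ m" if "k \<in> D" for k m
  proof -
    have "avK (A (xs m) k) \<le> 1" using AO[OF that] by (simp add: K.ints_iff)
    then show ?thesis using K.av_nonneg[of "A (xs m) k"] K.c0
      by (simp add: K.av_mult K.av_power pK mult_left_le)
  qed
  have cauchy: "avK (C m k - C n k) \<le> cK ^ n" if k: "k \<in> D" and nm: "n \<le> m" for k n m
    using nm
  proof (induction m rule: dec_induct)
    case base then show ?case using K.c0 by simp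
  next
    case (step m)
    have e1: "C (Suc m) k - C n k = (C m k - C n k) + p ^ m * A (xs m) k" by (simp add: CS)
    moreover have "avK (p ^ m * A (xs m) k) \<le> cK ^ n"
    proof -
      have "cK ^ m \<le> cK ^ n" using power_decreasing[OF step(1), of cK] K.c0 K.c1 by simp
      then show ?thesis using avpA[OF k, of m] by linarith
    qed
    moreover have b1: "avK ((C m k - C n k) + p ^ m * A (xs m) k) \<le> cK ^ n"
      using K.av_ultra[of "C m k - C n k" "p ^ m * A (xs m) k"] step(3) calculation(2) by simp
    ultimately show ?case by (subst e1) (rule b1)
  qed
  have "\<forall>k\<in>D. \<exists>l. \<forall>e>0. \<exists>N. \<forall>n\<ge>N. avK (C n k - l) < e"
  proof
    fix k assume k: "k \<in> D"
    have "\<forall>e>0. \<exists>N. \<forall>m\<ge>N. \<forall>n\<ge>N. avK (C m k - C n k) < e"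
    proof (intro allI impI)
      fix e :: real assume "0 < e"
      then obtain N where N: "cK ^ N < e" using real_arch_pow_inv[of e cK] K.c1 by blast
      have "avK (C m k - C n k) < e" if "m \<ge> N" "n \<ge> N" for m n
      proof (cases "n \<le> m")
        case True
        then have "avK (C m k - C n k) \<le> cK ^ n" by (rule cauchy[OF k])
        also have "\<dots> \<le> cK ^ N" using that K.c0 K.c1 by (simp add: power_decreasing)
        finally show ?thesis using N by simp
      next
        case False
        then have "avK (C n k - C m k) \<le> cK ^ m" using cauchy[OF k] by simp
        also have "\<dots> \<le> cK ^ N" using that K.c0 K.c1 by (simp add: power_decreasing)
        finally show ?thesis using N K.av_diff_comm[of "C m k" "C n k"] by simp
      qed
      then show "\<exists>N. \<forall>m\<ge>N. \<forall>n\<ge>N. avK (C m k - C n k) < e" by blast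
    qed
    then show "\<exists>l. \<forall>e>0. \<exists>N. \<forall>n\<ge>N. avK (C n k - l) < e"
      using cpl unfolding complete_abs_def by (rule mp[OF spec[of _ "\<lambda>n. C n k"], rotated])
  qed
  then obtain Lm where Lm: "\<And>k e. k \<in> D \<Longrightarrow> 0 < e \<Longrightarrow> \<exists>N. \<forall>n\<ge>N. avK (C n k - Lm k) < e"
    by metis
  have LmO: "Lm k \<in> K.Oi" if k: "k \<in> D" for k
  proof -
    obtain N where N: "\<forall>n\<ge>N. avK (C n k - Lm k) < 1" using Lm[OF k, of 1] by auto
    have "Lm k = C N k - (C N k - Lm k)" by simp
    then have "avK (Lm k) \<le> max (avK (C N k)) (avK (C N k - Lm k))"
      using K.av_diff[of "C N k" "C N k - Lm k"] by simp
    moreover have "avK (C N k) \<le> 1" using CO[OF k] by (simp add: K.ints_iff)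
    moreover have "avK (C N k - Lm k) < 1" using N by simp
    ultimately show ?thesis by (simp add: K.ints_iff)
  qed
  have "x0 - W Lm = 0"
  proof (rule ccontr)
    assume z: "x0 - W Lm \<noteq> 0"
    let ?eps = "avL (x0 - W Lm)"
    have eps: "0 < ?eps" using L.av_pos[OF z] .
    obtain M where M: "q ^ M < ?eps" using real_arch_pow_inv[OF eps q_lt1] by blast
    have cM: "0 < cK ^ M" using K.c0 by simp
    have "\<forall>k\<in>D. \<exists>N. \<forall>n\<ge>N. avK (C n k - Lm k) < cK ^ M" using Lm cM by blast
    then obtain Nf where Nf: "\<And>k n. k \<in> D \<Longrightarrow> n \<ge> Nf k \<Longrightarrow> avK (C n k - Lm k) < cK ^ M" by metis
    define n where "n = M + (\<Sum>k\<in>D. Nf k)"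
    have nN: "k \<in> D \<Longrightarrow> Nf k \<le> n" for k
      unfolding n_def using member_le_sum[of k D Nf] finD by simp
    have nM: "M \<le> n" by (simp add: n_def)
    have "x0 - W Lm = W (\<lambda>k. C n k - Lm k) + f p ^ n * xs n"
      using ident[of n] W_diff[of "C n" Lm] by (simp add: algebra_simps)
    moreover have "avL (W (\<lambda>k. C n k - Lm k)) < q ^ M"
      unfolding W_def
    proof (rule L.av_sum_less)
      show "0 < q ^ M" using q_pos by simp
      fix k assume k: "k \<in> D"
      have "avK (C n k - Lm k) < avK (p ^ M)" using Nf[OF k nN[OF k]] by (simp add: K.av_power pK)
      then have "avL (f (C n k - Lm k)) < avL (f (p ^ M))" by (rule avf_less)
      then have "avL (f (C n k - Lm k)) < q ^ M" by (simp add: femb_power[OF femb] L.av_power q_def)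
      moreover have "avL (w k) \<le> 1" using w_O[OF k] by (simp add: L.ints_iff)
      ultimately show "avL (f (C n k - Lm k) * w k) < q ^ M"
        using L.av_nonneg[of "f (C n k - Lm k)"] L.av_nonneg[of "w k"]
        by (simp add: L.av_mult) (meson le_less_trans mult_left_le)
    qed
    moreover have "avL (f p ^ n * xs n) \<le> q ^ M"
    proof -
      have "avL (xs n) \<le> 1" using xsO by (simp add: L.ints_iff)
      then have "avL (f p ^ n * xs n) \<le> q ^ n"
        using L.av_nonneg[of "xs n"] q_pos by (simp add: L.av_mult L.av_power q_def mult_left_le)
      also have "\<dots> \<le> q ^ M" using nM q_pos q_lt1 by (simp add: power_decreasing)
      finally show ?thesis .
    qed
    ultimately have "?eps \<le> q ^ M"
      using L.av_ultra[of "W (\<lambda>k. C n k - Lm k)" "f p ^ n * xs n"] by simp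
    then show False using M by simp
  qed
  then have "x0 = W Lm" by simp
  then show ?thesis using LmO by (intro exI[of _ Lm]) blast
qed

lemma W_cong: "(\<And>k. k \<in> D \<Longrightarrow> a k = b k) \<Longrightarrow> W a = W b"
  unfolding W_def by (intro sum.cong) auto

lemma span_L: "\<exists>a. y = W a"
proof (cases "y = 0")
  case True then show ?thesis using W_zero by metis
next
  case False
  have ay: "0 < avL y" using L.av_pos[OF False] .
  obtain m where m: "q ^ m < 1 / avL y" using real_arch_pow_inv[of "1 / avL y" q] ay q_lt1 by auto
  have "avL (f p ^ m * y) < 1"
    using m ay by (simp add: L.av_mult L.av_power q_def[symmetric] field_simps)
  then have "f p ^ m * y \<in> L.Oi" by (simp add: L.ints_iff)
  then obtain a where a: "f p ^ m * y = W a" using span_OL by blast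
  have "f (inverse (p ^ m)) * W a = W (\<lambda>k. inverse (p ^ m) * a k)" by (rule W_scale)
  moreover have "f (inverse (p ^ m)) * W a = y"
    using a[symmetric] fp0 by (simp add: femb_inverse[OF femb] femb_power[OF femb])
  ultimately show ?thesis by metis
qed

theorem free_basis:
  "finite D \<and> card D = ext_degree f \<and> (\<forall>k\<in>D. w k \<in> L.Oi) \<and>
   (\<forall>x\<in>L.Oi. \<exists>a. (\<forall>k\<in>D. a k \<in> K.Oi) \<and> x = W a) \<and>
   (\<forall>a. W a = 0 \<longrightarrow> (\<forall>k\<in>D. a k = 0))"
proof -
  have "card D = ext_degree f"
  proof (rule basis_dim[OF femb finD])
    show "\<forall>k\<in>D. a k = 0" if "(\<Sum>k\<in>D. f (a k) * w k) = 0" for a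
      using W_indep[of a] that by (simp add: W_def)
    show "\<exists>a. x = (\<Sum>k\<in>D. f (a k) * w k)" for x using span_L[of x] by (simp add: W_def)
  qed
  then show ?thesis using finD w_O span_OL W_indep by blast
qed

end

section \<open>Injective endomorphisms of L^n\<close>

definition vscale :: "'a::field \<Rightarrow> ('n \<Rightarrow> 'a) \<Rightarrow> ('n \<Rightarrow> 'a)" where
  "vscale c x = (\<lambda>i. c * x i)"

definition ev :: "'n \<Rightarrow> ('n \<Rightarrow> 'a::field)" where
  "ev j = (\<lambda>i. if i = j then 1 else 0)"

lemma fsum_apply: "(sum g A) i = sum (\<lambda>j. g j i) A"
  by (induction A rule: infinite_finite_induct) (simp_all add: zero_fun_def plus_fun_def)

lemma vs_fun: "vector_space (vscale :: 'a::field \<Rightarrow> ('n \<Rightarrow> 'a) \<Rightarrow> _)"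
  unfolding vector_space_def vscale_def by (simp add: fun_eq_iff algebra_simps)

lemma ev_expand: "x = (\<Sum>j\<in>UNIV. vscale (x j) (ev j :: 'n::finite \<Rightarrow> 'a::field))"
proof -
  have "(\<Sum>j\<in>UNIV. vscale (x j) (ev j)) i = x i" for i
  proof -
    have "(\<Sum>j\<in>UNIV. vscale (x j) (ev j)) i = (\<Sum>j\<in>UNIV. x j * ev j i)"
      by (simp add: vscale_def fsum_apply)
    also have "\<dots> = (\<Sum>j\<in>UNIV. if i = j then x j else 0)" by (intro sum.cong) (auto simp: ev_def)
    also have "\<dots> = x i" by (simp add: sum.delta)
    finally show ?thesis .
  qed
  then show ?thesis by (simp add: fun_eq_iff)
qed

lemma fdvs_fun: "finite_dimensional_vector_space (vscale :: 'a::field \<Rightarrow> ('n::finite \<Rightarrow> 'a) \<Rightarrow> _) (range ev)"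
proof -
  interpret V: vector_space "vscale :: 'a \<Rightarrow> ('n \<Rightarrow> 'a) \<Rightarrow> _" by (rule vs_fun)
  have inj: "inj (ev :: 'n \<Rightarrow> 'n \<Rightarrow> 'a)"
  proof (rule injI)
    fix a b :: 'n assume "ev a = (ev b :: 'n \<Rightarrow> 'a)"
    then have "ev a a = (ev b a :: 'a)" by simp
    then show "a = b" by (simp add: ev_def split: if_splits)
  qed
  have ind: "V.independent (range ev)"
  proof
    assume dep: "V.dependent (range ev)"
    have fin: "finite (range (ev :: 'n \<Rightarrow> 'n \<Rightarrow> 'a))" by simp
    obtain u where u: "\<exists>v\<in>range (ev :: 'n \<Rightarrow> 'n \<Rightarrow> 'a). u v \<noteq> 0"
        "(\<Sum>v\<in>range (ev :: 'n \<Rightarrow> 'n \<Rightarrow> 'a). vscale (u v) v) = 0"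
      using V.dependent_finite[OF fin] dep by blast
    have "(\<Sum>j\<in>UNIV. vscale (u (ev j)) (ev j :: 'n \<Rightarrow> 'a)) = 0"
      using u(2) sum.reindex[OF inj, of "\<lambda>v. vscale (u v) v"] by simp
    then have "(\<lambda>j. u (ev j)) = (\<Sum>j\<in>UNIV. vscale (u (ev j)) (ev j))"
      using ev_expand[of "\<lambda>j. u (ev j)"] by simp
    then have "\<forall>j. u (ev j) = 0" using \<open>(\<Sum>j\<in>UNIV. vscale (u (ev j)) (ev j)) = 0\<close>
      by (metis zero_fun_def)
    then show False using u(1) by auto
  qed
  have sp: "V.span (range ev) = UNIV"
  proof -
    have "x \<in> V.span (range ev)" for x
    proof -
      have "(\<Sum>j\<in>UNIV. vscale (x j) (ev j)) \<in> V.span (range ev)"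
        by (intro V.span_sum V.span_scale V.span_base) simp
      then show ?thesis using ev_expand[of x] by simp
    qed
    then show ?thesis by blast
  qed
  show ?thesis
    by (rule finite_dimensional_vector_space.intro[OF vs_fun])
       (unfold_locales, simp_all add: ind sp)
qed

lemma mat_vec_inj_surj:
  fixes U :: "'n::finite \<Rightarrow> 'n \<Rightarrow> 'a::field"
  assumes "inj (mat_vec U)"
  shows "surj (mat_vec U)"
proof -
  interpret F: finite_dimensional_vector_space "vscale :: 'a \<Rightarrow> ('n \<Rightarrow> 'a) \<Rightarrow> _" "range ev"
    by (rule fdvs_fun)
  have lin: "Vector_Spaces.linear vscale vscale (mat_vec U)"
    unfolding Vector_Spaces.linear_iff using vs_fun
    by (simp add: mat_vec_add vscale_def mat_vec_scale)
  show ?thesis by (rule F.linear_inj_imp_surj[OF lin assms])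
qed


context lext
begin

definition Phi :: "(nat \<times> nat \<Rightarrow> 'n::finite \<Rightarrow> 'k) \<Rightarrow> ('n \<Rightarrow> 'l)" where
  "Phi X = (\<lambda>i. W (\<lambda>k. X k i))"

lemma W_sum: "W (\<lambda>k. \<Sum>j\<in>J. g j k) = (\<Sum>j\<in>J. W (g j))"
proof -
  have "W (\<lambda>k. \<Sum>j\<in>J. g j k) = (\<Sum>k\<in>D. \<Sum>j\<in>J. f (g j k) * w k)"
    by (simp add: W_def femb_sum[OF femb] sum_distrib_right)
  also have "\<dots> = (\<Sum>j\<in>J. \<Sum>k\<in>D. f (g j k) * w k)" by (rule sum.swap)
  finally show ?thesis by (simp add: W_def)
qed

lemma Phi_in: "X \<in> prodset D (vecs K.Oi) \<Longrightarrow> Phi X \<in> vecs L.Oi"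
  unfolding Phi_def vecs_def prodset_def by (auto intro!: W_in)

lemma Phi_diff: "Phi (X - Y) = Phi X - Phi Y"
  unfolding Phi_def using W_diff by (simp add: fun_eq_iff)

lemma Phi_add: "Phi (X + Y) = Phi X + Phi Y"
  unfolding Phi_def using W_add by (simp add: fun_eq_iff)

lemma Phi_zero: "Phi 0 = 0"
  unfolding Phi_def using W_zero by (simp add: fun_eq_iff zero_fun_def)

lemma Phi_surj:
  assumes z: "z \<in> vecs L.Oi"
  shows "\<exists>X\<in>prodset D (vecs K.Oi). Phi X = z"
proof -
  have "\<forall>i. \<exists>a. (\<forall>k\<in>D. a k \<in> K.Oi) \<and> z i = W a" using z span_OL by (auto simp: vecs_def)
  then obtain a where a: "\<And>i. (\<forall>k\<in>D. a i k \<in> K.Oi) \<and> z i = W (a i)" by metis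
  define X where "X k = (if k \<in> D then (\<lambda>i. a i k) else 0)" for k
  have "X \<in> prodset D (vecs K.Oi)" using a by (auto simp: X_def prodset_def vecs_def)
  moreover have "Phi X = z"
  proof
    fix i
    have "W (\<lambda>k. X k i) = W (a i)" by (rule W_cong) (simp add: X_def)
    then show "Phi X i = z i" using a by (simp add: Phi_def)
  qed
  ultimately show ?thesis by blast
qed

lemma Phi_inj:
  assumes X: "X \<in> prodset D (vecs K.Oi)" and Y: "Y \<in> prodset D (vecs K.Oi)" and e: "Phi X = Phi Y"
  shows "X = Y"
proof -
  have "Phi (X - Y) = 0" using e Phi_diff[of X Y] by simp
  then have "\<forall>k\<in>D. X k i - Y k i = 0" for i
    using W_indep[of "\<lambda>k. X k i - Y k i"] by (simp add: Phi_def fun_eq_iff)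
  then have "\<forall>k\<in>D. X k = Y k" by (simp add: fun_eq_iff)
  moreover have "\<forall>k. k \<notin> D \<longrightarrow> X k = Y k" using X Y by (simp add: prodset_def)
  ultimately show ?thesis by (metis ext)
qed

lemma Phi_mat: "mat_vec (\<lambda>i j. f (T i j)) (Phi X) = Phi (\<lambda>k. mat_vec T (X k))"
proof
  fix i
  have "mat_vec (\<lambda>i j. f (T i j)) (Phi X) i = (\<Sum>j\<in>UNIV. f (T i j) * W (\<lambda>k. X k j))"
    by (simp add: mat_vec_def Phi_def)
  also have "\<dots> = (\<Sum>j\<in>UNIV. W (\<lambda>k. T i j * X k j))" by (simp add: W_scale)
  also have "\<dots> = W (\<lambda>k. \<Sum>j\<in>UNIV. T i j * X k j)" by (rule W_sum[symmetric])
  finally show "mat_vec (\<lambda>i j. f (T i j)) (Phi X) i = Phi (\<lambda>k. mat_vec T (X k)) i"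
    by (simp add: mat_vec_def Phi_def)
qed

lemma Phi_smul: "(\<lambda>i. f t * Phi X i) = Phi (\<lambda>k. (\<lambda>i. t * X k i))"
  by (simp add: Phi_def W_scale)

lemma sgrp_Phi:
  fixes N :: "('n::finite \<Rightarrow> 'k) set"
  assumes N: "sgrp N" and NV: "N \<subseteq> vecs K.Oi"
  shows "sgrp (Phi ` prodset D N)"
  unfolding sgrp_def
proof (intro conjI ballI)
  have "0 \<in> prodset D N" using sgrp_0[OF sgrp_prodset[OF N]] .
  then show "0 \<in> Phi ` prodset D N" using Phi_zero by (metis image_eqI)
  fix x y assume "x \<in> Phi ` prodset D N" "y \<in> Phi ` prodset D N"
  then obtain X Y where XY: "X \<in> prodset D N" "Y \<in> prodset D N" "x = Phi X" "y = Phi Y" by blast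
  then have "X - Y \<in> prodset D N" using sgrp_diff[OF sgrp_prodset[OF N]] by blast
  moreover have "x - y = Phi (X - Y)" using XY Phi_diff[of X Y] by simp
  ultimately show "x - y \<in> Phi ` prodset D N" by blast
qed

lemma prodset_mono: "N \<subseteq> M \<Longrightarrow> prodset I N \<subseteq> prodset I M"
  by (auto simp: prodset_def)

lemma transport:
  fixes N :: "('n::finite \<Rightarrow> 'k) set"
  assumes N: "sgrp N" and NV: "N \<subseteq> vecs K.Oi"
  shows "card (gq (vecs L.Oi) (Phi ` prodset D N)) = card (gq (vecs K.Oi) N) ^ card D
    \<and> (finite (gq (vecs K.Oi) N) \<longrightarrow> finite (gq (vecs L.Oi) (Phi ` prodset D N)))"
proof -
  let ?G = "prodset D (vecs K.Oi :: ('n \<Rightarrow> 'k) set)"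
  have VK: "sgrp (vecs K.Oi :: ('n \<Rightarrow> 'k) set)" by (rule sgrp_vecs[OF K.sgrp_O])
  have G: "sgrp ?G" by (rule sgrp_prodset[OF VK])
  have NG: "prodset D N \<subseteq> ?G" by (rule prodset_mono[OF NV])
  have iso: "card (gq ?G (prodset D N)) = card (gq (vecs L.Oi) (Phi ` prodset D N))
     \<and> (finite (gq ?G (prodset D N)) \<longleftrightarrow> finite (gq (vecs L.Oi) (Phi ` prodset D N)))"
  proof (rule gq_hom[OF sgrp_Phi[OF N NV] _ _ _ _ G])
    show "X \<in> ?G \<Longrightarrow> Phi X \<in> vecs L.Oi" for X by (rule Phi_in)
    show "Phi (X - Y) = Phi X - Phi Y" for X Y by (rule Phi_diff)
    show "\<exists>g\<in>?G. h - Phi g \<in> Phi ` prodset D N" if hV: "h \<in> vecs L.Oi" for h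
    proof -
      obtain X where "X \<in> ?G" "Phi X = h" using Phi_surj[OF hV] by blast
      moreover have "0 \<in> prodset D N" using sgrp_0[OF sgrp_prodset[OF N]] .
      ultimately show ?thesis using Phi_zero by (metis diff_self image_eqI)
    qed
    show "Phi X \<in> Phi ` prodset D N \<longleftrightarrow> X \<in> prodset D N" if X: "X \<in> ?G" for X
    proof
      assume "Phi X \<in> Phi ` prodset D N"
      then obtain Y where "Y \<in> prodset D N" "Phi X = Phi Y" by blast
      moreover then have "X = Y" using Phi_inj[OF X] NG by blast
      ultimately show "X \<in> prodset D N" by simp
    qed simp
  qed
  have pr: "card (gq ?G (prodset D N)) = card (gq (vecs K.Oi) N) ^ card D
     \<and> (finite (gq (vecs K.Oi) N) \<longrightarrow> finite (gq ?G (prodset D N)))"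
    by (rule gq_prod[OF N NV finD VK])
  show ?thesis using iso pr by simp
qed

lemma cok_T:
  fixes T :: "'n::finite \<Rightarrow> 'n \<Rightarrow> 'k"
  assumes T: "\<forall>i j. T i j \<in> K.Oi" and t: "t \<in> K.Oi"
  shows "sum_set (mat_vec (\<lambda>i j. f (T i j)) ` vecs L.Oi) (smul_set (f t) (vecs L.Oi))
       = Phi ` prodset D (sum_set (mat_vec T ` vecs K.Oi) (smul_set t (vecs K.Oi)))"
proof
  let ?TL = "\<lambda>i j. f (T i j)"
  show "sum_set (mat_vec ?TL ` vecs L.Oi) (smul_set (f t) (vecs L.Oi))
       \<subseteq> Phi ` prodset D (sum_set (mat_vec T ` vecs K.Oi) (smul_set t (vecs K.Oi)))"
  proof
    fix z assume "z \<in> sum_set (mat_vec ?TL ` vecs L.Oi) (smul_set (f t) (vecs L.Oi))"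
    then obtain v u where vu: "z = mat_vec ?TL v + (\<lambda>i. f t * u i)" "v \<in> vecs L.Oi" "u \<in> vecs L.Oi"
      unfolding sum_set_eq smul_set_def by blast
    obtain Y where Y: "Y \<in> prodset D (vecs K.Oi)" "Phi Y = v" using Phi_surj[OF vu(2)] by blast
    obtain Z where Z: "Z \<in> prodset D (vecs K.Oi)" "Phi Z = u" using Phi_surj[OF vu(3)] by blast
    define X where "X k = mat_vec T (Y k) + (\<lambda>i. t * Z k i)" for k
    have "z = Phi X"
    proof -
      have "mat_vec ?TL v = Phi (\<lambda>k. mat_vec T (Y k))" using Phi_mat Y by metis
      moreover have "(\<lambda>i. f t * u i) = Phi (\<lambda>k. (\<lambda>i. t * Z k i))" using Phi_smul Z by metis
      moreover have "X = (\<lambda>k. mat_vec T (Y k)) + (\<lambda>k. (\<lambda>i. t * Z k i))"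
        by (rule ext) (simp add: X_def)
      then have "Phi X = Phi (\<lambda>k. mat_vec T (Y k)) + Phi (\<lambda>k. (\<lambda>i. t * Z k i))"
        using Phi_add by simp
      ultimately show ?thesis using vu(1) by simp
    qed
    moreover have "X \<in> prodset D (sum_set (mat_vec T ` vecs K.Oi) (smul_set t (vecs K.Oi)))"
      unfolding prodset_def
    proof (intro CollectI allI conjI impI)
      fix k assume k: "k \<in> D"
      have "Y k \<in> vecs K.Oi" "Z k \<in> vecs K.Oi" using Y(1) Z(1) k unfolding prodset_def by blast+
      then show "X k \<in> sum_set (mat_vec T ` vecs K.Oi) (smul_set t (vecs K.Oi))"
        unfolding X_def sum_set_eq smul_set_def by blast
    next
      fix k assume k: "k \<notin> D"
      then have "Y k = 0" "Z k = 0" using Y(1) Z(1) unfolding prodset_def by blast+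
      moreover have "mat_vec T 0 = 0" using mat_vec_diff[of T 0 0] by simp
      ultimately show "X k = 0" by (simp add: X_def zero_fun_def)
    qed
    ultimately show "z \<in> Phi ` prodset D (sum_set (mat_vec T ` vecs K.Oi) (smul_set t (vecs K.Oi)))" by blast
  qed
  show "Phi ` prodset D (sum_set (mat_vec T ` vecs K.Oi) (smul_set t (vecs K.Oi)))
       \<subseteq> sum_set (mat_vec ?TL ` vecs L.Oi) (smul_set (f t) (vecs L.Oi))"
  proof
    fix z assume "z \<in> Phi ` prodset D (sum_set (mat_vec T ` vecs K.Oi) (smul_set t (vecs K.Oi)))"
    then obtain X where X: "X \<in> prodset D (sum_set (mat_vec T ` vecs K.Oi) (smul_set t (vecs K.Oi)))" "z = Phi X"
      by blast
    have "\<forall>k\<in>D. \<exists>y zz. y \<in> vecs K.Oi \<and> zz \<in> vecs K.Oi \<and> X k = mat_vec T y + (\<lambda>i. t * zz i)"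
      using X(1) unfolding prodset_def sum_set_eq smul_set_def by blast
    then obtain Y0 Z0 where YZ: "\<And>k. k \<in> D \<Longrightarrow> Y0 k \<in> vecs K.Oi \<and> Z0 k \<in> vecs K.Oi \<and> X k = mat_vec T (Y0 k) + (\<lambda>i. t * Z0 k i)"
      by metis
    define Y where "Y k = (if k \<in> D then Y0 k else 0)" for k
    define Z where "Z k = (if k \<in> D then Z0 k else 0)" for k
    have Yp: "Y \<in> prodset D (vecs K.Oi)" "Z \<in> prodset D (vecs K.Oi)" using YZ by (auto simp: Y_def Z_def prodset_def)
    have "X = (\<lambda>k. mat_vec T (Y k)) + (\<lambda>k. (\<lambda>i. t * Z k i))"
    proof
      fix k show "X k = ((\<lambda>k. mat_vec T (Y k)) + (\<lambda>k. (\<lambda>i. t * Z k i))) k"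
      proof (cases "k \<in> D")
        case True then show ?thesis using YZ by (simp add: Y_def Z_def plus_fun_def)
      next
        case False
        then have "X k = 0" using X(1) unfolding prodset_def by blast
        moreover have "mat_vec T 0 = 0" using mat_vec_diff[of T 0 0] by simp
        ultimately show ?thesis using False by (simp add: Y_def Z_def plus_fun_def zero_fun_def)
      qed
    qed
    then have "z = mat_vec ?TL (Phi Y) + (\<lambda>i. f t * Phi Z i)"
      using X(2) Phi_add Phi_mat Phi_smul by metis
    moreover have "Phi Y \<in> vecs L.Oi" "Phi Z \<in> vecs L.Oi" using Phi_in Yp by blast+
    ultimately show "z \<in> sum_set (mat_vec ?TL ` vecs L.Oi) (smul_set (f t) (vecs L.Oi))"
      unfolding sum_set_eq smul_set_def by blast
  qed
qed

end


lemma sgrp_matimg: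
  fixes A :: "'n::finite \<Rightarrow> 'n \<Rightarrow> 'a::comm_ring_1"
  assumes R: "subring R" and A: "\<forall>i j. A i j \<in> R"
  shows "sgrp (mat_vec A ` vecs R) \<and> mat_vec A ` vecs R \<subseteq> vecs R"
proof
  have V: "sgrp (vecs R :: ('n \<Rightarrow> 'a) set)" by (rule sgrp_vecs[OF subring_sgrp[OF R]])
  show "sgrp (mat_vec A ` vecs R)"
    unfolding sgrp_def
  proof (intro conjI ballI)
    have "mat_vec A 0 = 0" using mat_vec_diff[of A 0 0] by simp
    then show "0 \<in> mat_vec A ` vecs R" using sgrp_0[OF V] by (metis image_eqI)
    fix x y assume "x \<in> mat_vec A ` vecs R" "y \<in> mat_vec A ` vecs R"
    then obtain a b where ab: "a \<in> vecs R" "b \<in> vecs R" "x = mat_vec A a" "y = mat_vec A b" by blast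
    moreover have "a - b \<in> vecs R" using sgrp_diff[OF V ab(1,2)] .
    ultimately show "x - y \<in> mat_vec A ` vecs R" using mat_vec_diff[of A a b] by (metis image_eqI)
  qed
  show "mat_vec A ` vecs R \<subseteq> vecs R" using mat_vec_vecs[OF R A] by blast
qed

lemma smul_sub: "subring R \<Longrightarrow> t \<in> R \<Longrightarrow> smul_set t (vecs R) \<subseteq> vecs R"
  unfolding smul_set_def vecs_def by (auto intro: subring_mult)

context lext
begin

lemma U_inj_all:
  fixes U :: "'n::finite \<Rightarrow> 'n \<Rightarrow> 'l"
  assumes inj: "inj_on (mat_vec U) (vecs L.Oi)"
  shows "inj (mat_vec U)"
proof -
  have ker: "x = 0" if U0: "mat_vec U x = 0" for x
  proof (rule ccontr)
    assume x0: "x \<noteq> 0"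
    obtain i0 where i0: "\<forall>i\<in>UNIV. avL (x i) \<le> avL (x i0)"
      using L.argmax_fin[OF finite_UNIV UNIV_not_empty, of "\<lambda>i. avL (x i)"] by blast
    obtain i1 where "x i1 \<noteq> 0" using x0 by (auto simp: fun_eq_iff)
    then have "0 < avL (x i1)" by (rule L.av_pos)
    then have pos: "0 < avL (x i0)" using i0 by (meson UNIV_I less_le_trans)
    then have xi0: "x i0 \<noteq> 0" by auto
    define y where "y = (\<lambda>i. inverse (x i0) * x i)"
    have "y \<in> vecs L.Oi"
      unfolding vecs_def
    proof (intro CollectI allI)
      fix i
      have "avL (y i) = avL (x i) / avL (x i0)" by (simp add: y_def L.av_mult L.av_inverse divide_inverse mult.commute)
      also have "\<dots> \<le> 1" using i0 pos by simp
      finally show "y i \<in> L.Oi" by (simp add: L.ints_iff)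
    qed
    moreover have "mat_vec U y = mat_vec U 0"
    proof -
      have "mat_vec U y = (\<lambda>i. inverse (x i0) * mat_vec U x i)" unfolding y_def by (rule mat_vec_scale)
      also have "\<dots> = 0" using U0 by (simp add: fun_eq_iff)
      also have "\<dots> = mat_vec U 0" using mat_vec_diff[of U 0 0] by simp
      finally show ?thesis .
    qed
    moreover have "(0 :: 'n \<Rightarrow> 'l) \<in> vecs L.Oi" by (rule sgrp_0[OF sgrp_vecs[OF L.sgrp_O]])
    ultimately have "y = 0" using inj by (meson inj_onD)
    then have "y i0 = 0" by simp
    then show False using xi0 by (simp add: y_def)
  qed
  show ?thesis
  proof (rule injI)
    fix a b assume "mat_vec U a = mat_vec U b"
    then have "mat_vec U (a - b) = 0" using mat_vec_diff[of U a b] by simp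
    then have "a - b = 0" by (rule ker)
    then show "a = b" by simp
  qed
qed

lemma U_image:
  fixes U :: "'n::finite \<Rightarrow> 'n \<Rightarrow> 'l"
  assumes inj: "inj_on (mat_vec U) (vecs L.Oi)"
  shows "\<exists>m. \<forall>z\<in>vecs L.Oi. (\<lambda>i. f p ^ m * z i) \<in> mat_vec U ` vecs L.Oi"
proof -
  have "surj (mat_vec U)" by (rule mat_vec_inj_surj[OF U_inj_all[OF inj]])
  then have "\<forall>j. \<exists>y. mat_vec U y = ev j" by (metis surj_def)
  then obtain Y where Y: "\<And>j. mat_vec U (Y j) = ev j" by metis
  define B where "B = 1 + (\<Sum>j\<in>UNIV. \<Sum>i\<in>UNIV. avL (Y j i))"
  have Bge: "avL (Y j i) \<le> B" for j i
  proof -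
    have "avL (Y j i) \<le> (\<Sum>i\<in>UNIV. avL (Y j i))"
      by (rule member_le_sum) (simp_all add: L.av_nonneg)
    also have "\<dots> \<le> (\<Sum>j\<in>UNIV. \<Sum>i\<in>UNIV. avL (Y j i))"
      by (rule member_le_sum[where f = "\<lambda>j. \<Sum>i\<in>UNIV. avL (Y j i)"]) (simp_all add: L.av_nonneg sum_nonneg)
    finally show ?thesis by (simp add: B_def)
  qed
  have "0 \<le> (\<Sum>j\<in>UNIV. \<Sum>i\<in>UNIV. avL (Y j i))" by (intro sum_nonneg) (simp add: L.av_nonneg)
  then have Bpos: "0 < B" unfolding B_def by linarith
  obtain m where m: "q ^ m < 1 / B" using real_arch_pow_inv[of "1 / B" q] Bpos q_lt1 by auto
  have YO: "f p ^ m * Y j i \<in> L.Oi" for j i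
  proof -
    have "avL (f p ^ m * Y j i) = q ^ m * avL (Y j i)" by (simp add: L.av_mult L.av_power q_def)
    also have "\<dots> \<le> q ^ m * B" using Bge[of j i] q_pos by (simp add: mult_left_mono)
    also have "\<dots> < 1" using m Bpos by (simp add: field_simps)
    finally show ?thesis by (simp add: L.ints_iff)
  qed
  have "(\<lambda>i. f p ^ m * z i) \<in> mat_vec U ` vecs L.Oi" if z: "z \<in> vecs L.Oi" for z
  proof -
    define v where "v = (\<lambda>i. \<Sum>j\<in>UNIV. z j * (f p ^ m * Y j i))"
    have "v \<in> vecs L.Oi" unfolding v_def vecs_def
    proof (intro CollectI allI sgrp_sum[OF L.sgrp_O])
      fix i j
      show "z j * (f p ^ m * Y j i) \<in> L.Oi"
        using subring_mult[OF L.subring_O _ YO[of j i], of "z j"] z by (simp add: vecs_def)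
    qed
    moreover have "mat_vec U v = (\<lambda>i. f p ^ m * z i)"
    proof
      fix i'
      have "mat_vec U v i' = (\<Sum>i\<in>UNIV. \<Sum>j\<in>UNIV. U i' i * (z j * (f p ^ m * Y j i)))"
        by (simp add: mat_vec_def v_def sum_distrib_left)
      also have "\<dots> = (\<Sum>j\<in>UNIV. \<Sum>i\<in>UNIV. U i' i * (z j * (f p ^ m * Y j i)))" by (rule sum.swap)
      also have "\<dots> = (\<Sum>j\<in>UNIV. (z j * f p ^ m) * (\<Sum>i\<in>UNIV. U i' i * Y j i))"
        by (simp add: sum_distrib_left algebra_simps)
      also have "\<dots> = (\<Sum>j\<in>UNIV. (z j * f p ^ m) * ev j i')"
      proof (intro sum.cong refl)
        fix j
        have "(\<Sum>i\<in>UNIV. U i' i * Y j i) = mat_vec U (Y j) i'" by (simp add: mat_vec_def)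
        then show "(z j * f p ^ m) * (\<Sum>i\<in>UNIV. U i' i * Y j i) = (z j * f p ^ m) * ev j i'" using Y by simp
      qed
      also have "\<dots> = (\<Sum>j\<in>UNIV. if j = i' then z j * f p ^ m else 0)"
        by (intro sum.cong refl) (simp add: ev_def)
      also have "\<dots> = f p ^ m * z i'" by (simp add: sum.delta' mult.commute)
      finally show "mat_vec U v i' = f p ^ m * z i'" .
    qed
    ultimately show ?thesis by (metis image_eqI)
  qed
  then show ?thesis by blast
qed

lemma incl_sub:
  fixes U :: "'n::finite \<Rightarrow> 'n \<Rightarrow> 'l"
  assumes Lam: "Lam = {x \<in> vecs K.Oi. (\<lambda>i. f (x i)) \<in> mat_vec U ` vecs L.Oi}"
  shows "Phi ` prodset D (sum_set Lam (smul_set t (vecs K.Oi)))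
    \<subseteq> sum_set (mat_vec U ` vecs L.Oi) (smul_set (f t) (vecs L.Oi))"
proof
  fix z assume "z \<in> Phi ` prodset D (sum_set Lam (smul_set t (vecs K.Oi)))"
  then obtain X where X: "X \<in> prodset D (sum_set Lam (smul_set t (vecs K.Oi)))" "z = Phi X" by blast
  have "\<forall>k\<in>D. \<exists>l zz v. zz \<in> vecs K.Oi \<and> v \<in> vecs L.Oi \<and> (\<lambda>i. f (l i)) = mat_vec U v \<and> X k = l + (\<lambda>i. t * zz i)"
  proof
    fix k assume k: "k \<in> D"
    then have "X k \<in> sum_set Lam (smul_set t (vecs K.Oi))" using X(1) unfolding prodset_def by blast
    then obtain l zz where "l \<in> Lam" "zz \<in> vecs K.Oi" "X k = l + (\<lambda>i. t * zz i)"
      unfolding sum_set_eq smul_set_def by blast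
    moreover then obtain v where "v \<in> vecs L.Oi" "(\<lambda>i. f (l i)) = mat_vec U v" using Lam by blast
    ultimately show "\<exists>l zz v. zz \<in> vecs K.Oi \<and> v \<in> vecs L.Oi \<and> (\<lambda>i. f (l i)) = mat_vec U v \<and> X k = l + (\<lambda>i. t * zz i)"
      by blast
  qed
  then obtain Lf Zf Vf where F: "\<And>k. k \<in> D \<Longrightarrow> Zf k \<in> vecs K.Oi \<and> Vf k \<in> vecs L.Oi \<and>
      (\<lambda>i. f (Lf k i)) = mat_vec U (Vf k) \<and> X k = Lf k + (\<lambda>i. t * Zf k i)"
    by metis
  define Z where "Z k = (if k \<in> D then Zf k else 0)" for k
  have Zp: "Z \<in> prodset D (vecs K.Oi)" using F by (auto simp: Z_def prodset_def)
  define vv where "vv = (\<lambda>j. \<Sum>k\<in>D. w k * Vf k j)"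
  have vvO: "vv \<in> vecs L.Oi"
    unfolding vv_def vecs_def
  proof (intro CollectI allI sgrp_sum[OF L.sgrp_O] subring_mult[OF L.subring_O])
    fix j k assume "k \<in> D"
    then show "w k \<in> L.Oi" "Vf k j \<in> L.Oi" using w_O F by (auto simp: vecs_def)
  qed
  have "z = mat_vec U vv + (\<lambda>i. f t * Phi Z i)"
  proof
    fix i
    have "z i = (\<Sum>k\<in>D. f (X k i) * w k)" using X(2) by (simp add: Phi_def W_def)
    also have "\<dots> = (\<Sum>k\<in>D. f (Lf k i) * w k + f t * (f (Zf k i) * w k))"
      by (intro sum.cong refl) (simp add: F femb_add[OF femb] femb_mult[OF femb] algebra_simps)
    also have "\<dots> = (\<Sum>k\<in>D. f (Lf k i) * w k) + f t * (\<Sum>k\<in>D. f (Zf k i) * w k)"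
      by (simp add: sum.distrib sum_distrib_left)
    also have "(\<Sum>k\<in>D. f (Zf k i) * w k) = Phi Z i"
      by (simp add: Phi_def W_def Z_def)
    also have "(\<Sum>k\<in>D. f (Lf k i) * w k) = mat_vec U vv i"
    proof -
      have "mat_vec U vv i = (\<Sum>j\<in>UNIV. \<Sum>k\<in>D. U i j * (w k * Vf k j))"
        by (simp add: mat_vec_def vv_def sum_distrib_left)
      also have "\<dots> = (\<Sum>k\<in>D. \<Sum>j\<in>UNIV. U i j * (w k * Vf k j))" by (rule sum.swap)
      also have "\<dots> = (\<Sum>k\<in>D. w k * mat_vec U (Vf k) i)"
        by (simp add: mat_vec_def sum_distrib_left algebra_simps)
      also have "\<dots> = (\<Sum>k\<in>D. f (Lf k i) * w k)"
      proof (intro sum.cong refl)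
        fix k assume "k \<in> D"
        then have "mat_vec U (Vf k) i = f (Lf k i)" using F by (metis)
        then show "w k * mat_vec U (Vf k) i = f (Lf k i) * w k" by simp
      qed
      finally show ?thesis by simp
    qed
    finally show "z i = (mat_vec U vv + (\<lambda>i. f t * Phi Z i)) i" by simp
  qed
  moreover have "Phi Z \<in> vecs L.Oi" using Phi_in[OF Zp] .
  ultimately show "z \<in> sum_set (mat_vec U ` vecs L.Oi) (smul_set (f t) (vecs L.Oi))"
    unfolding sum_set_eq smul_set_def using vvO by blast
qed

end


theorem lemma7p2:
  fixes avK :: "'k::field \<Rightarrow> real" and avL :: "'l::field \<Rightarrow> real"
    and f :: "'k \<Rightarrow> 'l" and p :: 'k and r :: nat
  assumes ext: "local_field_ext avK avL f"
    and unif: "uniformizer avK p"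
  shows
    "(\<forall>T :: 'n::finite \<Rightarrow> 'n \<Rightarrow> 'k.
        (\<forall>i j. T i j \<in> ints avK) \<longrightarrow> inj_on (mat_vec T) (vecs (ints avK)) \<longrightarrow>
        (let TL = (\<lambda>i j. f (T i j)) in
          finite (ker_mod (ints avL) TL (f p ^ r)) \<and> finite (cok_mod (ints avL) TL (f p ^ r)) \<and>
          finite (ker_mod (ints avK) T (p ^ r)) \<and> finite (cok_mod (ints avK) T (p ^ r)) \<and>
          card (ker_mod (ints avL) TL (f p ^ r)) = card (cok_mod (ints avL) TL (f p ^ r)) \<and>
          card (cok_mod (ints avL) TL (f p ^ r)) = card (ker_mod (ints avK) T (p ^ r)) ^ ext_degree f \<and>
          card (ker_mod (ints avK) T (p ^ r)) ^ ext_degree f = card (cok_mod (ints avK) T (p ^ r)) ^ ext_degree f))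
     \<and>
     (\<forall>U :: 'n::finite \<Rightarrow> 'n \<Rightarrow> 'l.
        (\<forall>i j. U i j \<in> ints avL) \<longrightarrow> inj_on (mat_vec U) (vecs (ints avL)) \<longrightarrow>
        (let Lam = {x \<in> vecs (ints avK). (\<lambda>i. f (x i)) \<in> mat_vec U ` vecs (ints avL)} in
          finite (ker_mod (ints avL) U (f p ^ r)) \<and> finite (cok_mod (ints avL) U (f p ^ r)) \<and>
          finite (ker_incl_mod (ints avK) Lam (p ^ r)) \<and> finite (cok_incl_mod (ints avK) Lam (p ^ r)) \<and>
          card (ker_mod (ints avL) U (f p ^ r)) = card (cok_mod (ints avL) U (f p ^ r)) \<and>
          card (cok_mod (ints avL) U (f p ^ r)) \<le> card (ker_incl_mod (ints avK) Lam (p ^ r)) ^ ext_degree f \<and>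
          card (ker_incl_mod (ints avK) Lam (p ^ r)) ^ ext_degree f = card (cok_incl_mod (ints avK) Lam (p ^ r)) ^ ext_degree f))"
proof -
  have nK: "nonarch_local_field avK" and nL: "nonarch_local_field avL" and fx: "finite_ext f"
    and sx: "\<exists>s>0. \<forall>a. avL (f a) = avK a powr s"
    using ext by (simp_all add: local_field_ext_def)
  obtain cK where cK: "0 < cK" "cK < 1" "avK ` (UNIV - {0}) = range (\<lambda>k::int. cK powi k)"
    using nK by (auto simp: nonarch_local_field_def discrete_abs_def)
  obtain cL where cL: "0 < cL" "cL < 1" "avL ` (UNIV - {0}) = range (\<lambda>k::int. cL powi k)"
    using nL by (auto simp: nonarch_local_field_def discrete_abs_def)
  obtain s where s: "0 < s" "\<And>a. avL (f a) = avK a powr s" using sx by blast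
  interpret K: dval avK cK using nK cK by unfold_locales (auto simp: nonarch_local_field_def)
  interpret L: dval avL cL using nL cL by unfold_locales (auto simp: nonarch_local_field_def)
  have frK: "finite_residue_field avK" and frL: "finite_residue_field avL" and cpl: "complete_abs avK"
    using nK nL by (simp_all add: nonarch_local_field_def)
  have femb: "field_emb f" using fx by (simp add: finite_ext_def)
  have pO: "p \<in> ints avK" and mi: "max_ideal avK = {p * y |y. y \<in> ints avK}"
    using unif by (simp_all add: uniformizer_def)
  have pK: "avK p = cK"
  proof -
    obtain pi where pi: "avK pi = cK" using K.ex_pi by blast
    then have "pi \<in> max_ideal avK" using cK by (simp add: max_ideal_def)
    then obtain y where y: "y \<in> ints avK" "pi = p * y" using mi by blast
    then have "cK = avK p * avK y" using pi by (simp add: K.av_mult)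
    moreover have "avK y \<le> 1" "0 \<le> avK p" using y K.av_nonneg by (simp_all add: K.ints_iff)
    ultimately have ge: "cK \<le> avK p" by (metis mult_left_le)
    have "p \<in> max_ideal avK" using mi sgrp_0 subring_1[OF K.subring_O] by (metis (mono_tags, lifting) mem_Collect_eq mult_1_right)
    then have "avK p < 1" by (simp add: max_ideal_def)
    then have "avK p \<le> cK" by (rule K.lt1_le_c)
    then show ?thesis using ge by simp
  qed
  interpret E: lext avK cK avL cL f p s
    by unfold_locales (use femb s pK cpl fx in auto)
  have fb: "card E.D = ext_degree f" using E.free_basis by blast
  have tK: "p ^ r \<in> ints avK" "p ^ r \<noteq> 0" using subring_power[OF K.subring_O pO] E.p0 by simp_all
  have ftp: "f p ^ r = f (p ^ r)" by (simp add: femb_power[OF femb])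
  have tL: "f p ^ r \<in> ints avL" "f p ^ r \<noteq> 0"
    using tK E.f_O femb_eq0[OF femb] ftp by simp_all
  have finK: "finite (gq (vecs (ints avK) :: ('n \<Rightarrow> 'k) set) (smul_set (p ^ r) (vecs (ints avK))))"
    by (rule K.fin_vecs[OF frK tK])
  have finL: "finite (gq (vecs (ints avL) :: ('n \<Rightarrow> 'l) set) (smul_set (f p ^ r) (vecs (ints avL))))"
    by (rule L.fin_vecs[OF frL tL])
  have VK: "sgrp (vecs (ints avK) :: ('n \<Rightarrow> 'k) set)" by (rule sgrp_vecs[OF K.sgrp_O])
  have VL: "sgrp (vecs (ints avL) :: ('n \<Rightarrow> 'l) set)" by (rule sgrp_vecs[OF L.sgrp_O])
  have TK: "sgrp (smul_set (p ^ r) (vecs (ints avK)) :: ('n \<Rightarrow> 'k) set)" by (rule sgrp_smul[OF VK])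
  have TKV: "smul_set (p ^ r) (vecs (ints avK)) \<subseteq> (vecs (ints avK) :: ('n \<Rightarrow> 'k) set)"
    by (rule smul_sub[OF K.subring_O tK(1)])
  show ?thesis
  proof (intro conjI allI impI)
    fix T :: "'n \<Rightarrow> 'n \<Rightarrow> 'k"
    assume TO: "\<forall>i j. T i j \<in> ints avK" and "inj_on (mat_vec T) (vecs (ints avK))"
    let ?TL = "\<lambda>i j. f (T i j)"
    have TLO: "\<forall>i j. ?TL i j \<in> ints avL" using TO E.f_O by simp
    have KK: "finite (ker_mod (ints avK) T (p ^ r)) \<and> finite (cok_mod (ints avK) T (p ^ r))
        \<and> card (ker_mod (ints avK) T (p ^ r)) = card (cok_mod (ints avK) T (p ^ r))"
      by (rule ker_cok_eq[OF K.subring_O TO tK(1) finK])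
    have LL: "finite (ker_mod (ints avL) ?TL (f p ^ r)) \<and> finite (cok_mod (ints avL) ?TL (f p ^ r))
        \<and> card (ker_mod (ints avL) ?TL (f p ^ r)) = card (cok_mod (ints avL) ?TL (f p ^ r))"
      by (rule ker_cok_eq[OF L.subring_O TLO tL(1) finL])
    let ?WK = "sum_set (mat_vec T ` vecs (ints avK)) (smul_set (p ^ r) (vecs (ints avK)))"
    have mi: "sgrp (mat_vec T ` vecs (ints avK)) \<and> mat_vec T ` vecs (ints avK) \<subseteq> vecs (ints avK)"
      by (rule sgrp_matimg[OF K.subring_O TO])
    have WK: "sgrp ?WK" by (rule sgrp_sum_set[OF conjunct1[OF mi] TK])
    have WKV: "?WK \<subseteq> vecs (ints avK)"
    proof
      fix z assume "z \<in> ?WK"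
      then obtain a b where "z = a + b" "a \<in> mat_vec T ` vecs (ints avK)" "b \<in> smul_set (p ^ r) (vecs (ints avK))"
        unfolding sum_set_eq by blast
      then show "z \<in> vecs (ints avK)" using mi TKV sgrp_add[OF VK] by blast
    qed
    have eqc: "cok_mod (ints avL) ?TL (f p ^ r) = gq (vecs (ints avL)) (E.Phi ` prodset E.D ?WK)"
      unfolding cok_mod_def quot_gq ftp using E.cok_T[OF TO tK(1)] by simp
    have tr: "card (gq (vecs (ints avL)) (E.Phi ` prodset E.D ?WK)) = card (gq (vecs (ints avK)) ?WK) ^ card E.D
        \<and> (finite (gq (vecs (ints avK)) ?WK) \<longrightarrow> finite (gq (vecs (ints avL)) (E.Phi ` prodset E.D ?WK)))"
      by (rule E.transport[OF WK WKV])
    have ck: "cok_mod (ints avK) T (p ^ r) = gq (vecs (ints avK)) ?WK"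
      unfolding cok_mod_def quot_gq ..
    have c1: "card (cok_mod (ints avL) ?TL (f p ^ r)) = card (cok_mod (ints avK) T (p ^ r)) ^ ext_degree f"
      using tr eqc ck fb by simp
    show "let TL = ?TL in
          finite (ker_mod (ints avL) TL (f p ^ r)) \<and> finite (cok_mod (ints avL) TL (f p ^ r)) \<and>
          finite (ker_mod (ints avK) T (p ^ r)) \<and> finite (cok_mod (ints avK) T (p ^ r)) \<and>
          card (ker_mod (ints avL) TL (f p ^ r)) = card (cok_mod (ints avL) TL (f p ^ r)) \<and>
          card (cok_mod (ints avL) TL (f p ^ r)) = card (ker_mod (ints avK) T (p ^ r)) ^ ext_degree f \<and>
          card (ker_mod (ints avK) T (p ^ r)) ^ ext_degree f = card (cok_mod (ints avK) T (p ^ r)) ^ ext_degree f"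
      unfolding Let_def using KK LL c1 by simp
  next
    fix U :: "'n \<Rightarrow> 'n \<Rightarrow> 'l"
    assume UO: "\<forall>i j. U i j \<in> ints avL" and Uinj: "inj_on (mat_vec U) (vecs (ints avL))"
    define Lam where "Lam = {x \<in> vecs (ints avK). (\<lambda>i. f (x i)) \<in> mat_vec U ` vecs (ints avL)}"
    have LL: "finite (ker_mod (ints avL) U (f p ^ r)) \<and> finite (cok_mod (ints avL) U (f p ^ r))
        \<and> card (ker_mod (ints avL) U (f p ^ r)) = card (cok_mod (ints avL) U (f p ^ r))"
      by (rule ker_cok_eq[OF L.subring_O UO tL(1) finL])
    have miU: "sgrp (mat_vec U ` vecs (ints avL)) \<and> mat_vec U ` vecs (ints avL) \<subseteq> vecs (ints avL)"
      by (rule sgrp_matimg[OF L.subring_O UO])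
    have fv0: "(\<lambda>i. f ((0 :: 'n \<Rightarrow> 'k) i)) = 0" by (simp add: fun_eq_iff femb_0[OF femb])
    have LamS: "sgrp Lam" unfolding sgrp_def
    proof (intro conjI ballI)
      show "0 \<in> Lam" unfolding Lam_def using sgrp_0[OF VK] sgrp_0[OF conjunct1[OF miU]] fv0 by simp
      fix x y assume "x \<in> Lam" "y \<in> Lam"
      then obtain a b where ab: "x \<in> vecs (ints avK)" "y \<in> vecs (ints avK)" "a \<in> vecs (ints avL)" "b \<in> vecs (ints avL)"
        "(\<lambda>i. f (x i)) = mat_vec U a" "(\<lambda>i. f (y i)) = mat_vec U b"
        unfolding Lam_def by blast
      have "(\<lambda>i. f ((x - y) i)) = mat_vec U (a - b)"
        using ab(5,6) by (simp add: mat_vec_diff fun_eq_iff femb_diff[OF femb])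
      moreover have "a - b \<in> vecs (ints avL)" using sgrp_diff[OF VL ab(3,4)] .
      moreover have "x - y \<in> vecs (ints avK)" using sgrp_diff[OF VK ab(1,2)] .
      ultimately show "x - y \<in> Lam" unfolding Lam_def by blast
    qed
    have LamV: "Lam \<subseteq> vecs (ints avK)" unfolding Lam_def by blast
    have Lamcl: "(\<lambda>i. a * x i) \<in> Lam" if a: "a \<in> ints avK" and x: "x \<in> Lam" for a x
    proof -
      obtain v where v: "v \<in> vecs (ints avL)" "(\<lambda>i. f (x i)) = mat_vec U v" "x \<in> vecs (ints avK)"
        using x unfolding Lam_def by blast
      have "(\<lambda>i. f (a * x i)) = mat_vec U (\<lambda>i. f a * v i)"
        using v(2) by (simp add: mat_vec_scale femb_mult[OF femb] fun_eq_iff)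
      moreover have "(\<lambda>i. f a * v i) \<in> vecs (ints avL)"
        using v(1) a E.f_O subring_mult[OF L.subring_O] by (simp add: vecs_def)
      moreover have "(\<lambda>i. a * x i) \<in> vecs (ints avK)"
        using v(3) a subring_mult[OF K.subring_O] by (simp add: vecs_def)
      ultimately show ?thesis unfolding Lam_def by blast
    qed
    obtain m where m: "\<forall>z\<in>vecs (ints avL). (\<lambda>i. f p ^ m * z i) \<in> mat_vec U ` vecs (ints avL)"
      using E.U_image[OF Uinj] by blast
    have sm: "p ^ m \<in> ints avK" "p ^ m \<noteq> 0" using subring_power[OF K.subring_O pO] E.p0 by simp_all
    have smL: "smul_set (p ^ m) (vecs (ints avK)) \<subseteq> Lam"
    proof
      fix x :: "'n \<Rightarrow> 'k" assume "x \<in> smul_set (p ^ m) (vecs (ints avK))"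
      then obtain y where y: "y \<in> vecs (ints avK)" "x = (\<lambda>i. p ^ m * y i)" unfolding smul_set_def by blast
      have fy: "(\<lambda>i. f (y i)) \<in> vecs (ints avL)" using y(1) E.f_O by (simp add: vecs_def)
      have "(\<lambda>i. f (x i)) = (\<lambda>i. f p ^ m * f (y i))" using y(2) by (simp add: femb_mult[OF femb] femb_power[OF femb])
      then have "(\<lambda>i. f (x i)) \<in> mat_vec U ` vecs (ints avL)" using m fy by simp
      moreover have "x \<in> vecs (ints avK)" using y smul_sub[OF K.subring_O sm(1)] unfolding smul_set_def by blast
      ultimately show "x \<in> Lam" unfolding Lam_def by blast
    qed
    have finS: "finite (gq (vecs (ints avK) :: ('n \<Rightarrow> 'k) set) (smul_set (p ^ m) (vecs (ints avK))))"
      by (rule K.fin_vecs[OF frK sm])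
    have KI: "finite (ker_incl_mod (ints avK) Lam (p ^ r)) \<and> finite (cok_incl_mod (ints avK) Lam (p ^ r))
       \<and> card (ker_incl_mod (ints avK) Lam (p ^ r)) = card (cok_incl_mod (ints avK) Lam (p ^ r))"
      by (rule ker_cok_incl_eq[OF K.subring_O tK LamS LamV Lamcl smL sm(1) finS finK])
    let ?NK = "sum_set Lam (smul_set (p ^ r) (vecs (ints avK)))"
    have NK: "sgrp ?NK" by (rule sgrp_sum_set[OF LamS TK])
    have NKV: "?NK \<subseteq> vecs (ints avK)"
    proof
      fix z assume "z \<in> ?NK"
      then obtain a b where "z = a + b" "a \<in> Lam" "b \<in> smul_set (p ^ r) (vecs (ints avK))"
        unfolding sum_set_eq by blast
      then show "z \<in> vecs (ints avK)" using LamV TKV sgrp_add[OF VK] by blast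
    qed
    have ck: "cok_incl_mod (ints avK) Lam (p ^ r) = gq (vecs (ints avK)) ?NK"
      unfolding cok_incl_mod_def quot_gq ..
    have tr: "card (gq (vecs (ints avL)) (E.Phi ` prodset E.D ?NK)) = card (gq (vecs (ints avK)) ?NK) ^ card E.D
        \<and> (finite (gq (vecs (ints avK)) ?NK) \<longrightarrow> finite (gq (vecs (ints avL)) (E.Phi ` prodset E.D ?NK)))"
      by (rule E.transport[OF NK NKV])
    let ?WU = "sum_set (mat_vec U ` vecs (ints avL)) (smul_set (f p ^ r) (vecs (ints avL)))"
    have sub: "E.Phi ` prodset E.D ?NK \<subseteq> ?WU"
      using E.incl_sub[OF Lam_def, of "p ^ r"] ftp by simp
    have TL: "sgrp (smul_set (f p ^ r) (vecs (ints avL)) :: ('n \<Rightarrow> 'l) set)" by (rule sgrp_smul[OF VL])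
    have WU: "sgrp ?WU" by (rule sgrp_sum_set[OF conjunct1[OF miU] TL])
    have WUV: "?WU \<subseteq> vecs (ints avL)"
    proof
      fix z assume "z \<in> ?WU"
      then obtain a b where "z = a + b" "a \<in> mat_vec U ` vecs (ints avL)" "b \<in> smul_set (f p ^ r) (vecs (ints avL))"
        unfolding sum_set_eq by blast
      then show "z \<in> vecs (ints avL)" using miU smul_sub[OF L.subring_O tL(1)] sgrp_add[OF VL] by blast
    qed
    have finM: "finite (gq (vecs (ints avL)) (E.Phi ` prodset E.D ?NK))" using tr KI ck by simp
    have le: "finite (gq (vecs (ints avL)) ?WU) \<and> card (gq (vecs (ints avL)) ?WU) \<le> card (gq (vecs (ints avL)) (E.Phi ` prodset E.D ?NK))"
      by (rule gq_sub[OF E.sgrp_Phi[OF NK NKV] sub WU WUV VL finM])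
    have c1: "card (cok_mod (ints avL) U (f p ^ r)) \<le> card (ker_incl_mod (ints avK) Lam (p ^ r)) ^ ext_degree f"
      using le tr ck KI fb unfolding cok_mod_def quot_gq by simp
    show "let Lam = {x \<in> vecs (ints avK). (\<lambda>i. f (x i)) \<in> mat_vec U ` vecs (ints avL)} in
          finite (ker_mod (ints avL) U (f p ^ r)) \<and> finite (cok_mod (ints avL) U (f p ^ r)) \<and>
          finite (ker_incl_mod (ints avK) Lam (p ^ r)) \<and> finite (cok_incl_mod (ints avK) Lam (p ^ r)) \<and>
          card (ker_mod (ints avL) U (f p ^ r)) = card (cok_mod (ints avL) U (f p ^ r)) \<and>
          card (cok_mod (ints avL) U (f p ^ r)) \<le> card (ker_incl_mod (ints avK) Lam (p ^ r)) ^ ext_degree f \<and>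
          card (ker_incl_mod (ints avK) Lam (p ^ r)) ^ ext_degree f = card (cok_incl_mod (ints avK) Lam (p ^ r)) ^ ext_degree f"
      unfolding Let_def Lam_def[symmetric] using LL KI c1 by simp
  qed
qed


end
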